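(* Let $N\ge1$, $n\ge1$, let $b$ be a positive integer, and let $\Omega$, $\langle\cdot,\cdot\rangle_{b,N}$ (on $F_{N,n}$) and $(\cdot,\cdot)_{b,N}$ (on Laurent polynomials) be as in the context. Then for all $f,g\in F_{N,n}$, $$\langle f,g\rangle_{b,N}=(\Omega(f),\Omega(g))_{b,N}.$$
   Context: For $k\in\mathbb Z$, $\underline{k}\in\{1,\dots,N\}$, $\overline{k}\in\mathbb Z$ unique with $k=\underline{k}-N\overline{k}$. $V=\mathbb C^N$ with basis $v_1,\dots,v_N$. $K_{ij}$ swaps $z_i,z_j$, $P_{ij}$ swaps factors $i,j$ of $V^{\otimes n}$; $F_{N,n}=\{f\in\mathbb C[z_1^{\pm1},\dots,z_n^{\pm1}]\otimes V^{\otimes n}:K_{ij}f=-P_{ij}f\}$ with basis $\hat u_k=\sum_{w\in S_n}\mathrm{sign}(w)z_1^{\overline{k_{w(1)}}}\cdots z_n^{\overline{k_{w(n)}}}\otimes v_{\underline{k_{w(1)}}}\otimes\cdots\otimes v_{\underline{k_{w(n)}}}$, $k_1>\dots>k_n$. Let $o=(0,-1,\dots,-n+1)$; for non-increasing $l\in\mathbb Z^n$, $s_l=\det(x_i^{l_j+n-j})/\det(x_i^{n-j})$. $\Omega$ is the linear isomorphism from $F_{N,n}$ onto symmetric Laurent polynomials in $x_1,\dots,x_n$ with $\Omega(\hat u_k)=s_{k-o}$ for $k_1>\dots>k_n$. Scalar products. On $\mathbb C[z^{\pm1}]\otimes V^{\otimes n}$: $\langle f\otimes u,g\otimes v\rangle'_{b,N}=\frac1{n!}\prod_j\oint\frac{dw_j}{2\pi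 iw_j}\prod_{i\ne j}(1-w_iw_j^{-1})^b\,\bar f(w^{-1})g(w)\cdot\langle u,v\rangle_N$ (unit circles; $\bar f$ has conjugated coefficients; tensor monomials orthonormal for $\langle\cdot,\cdot\rangle_N$), extended sesquilinearly; $\langle\cdot,\cdot\rangle_{b,N}$ is the restriction to $F_{N,n}$. For Laurent polynomials in $x$: $f^*=\bar f(x_1^{-1},\dots,x_n^{-1})$, $[h]_1$ the constant term, $\Delta(b,N)=\prod_{1\le i\ne j\le n}(1-x_i^Nx_j^{-N})^b(1-x_ix_j^{-1})$, $(f,g)_{b,N}=\frac1{n!}[\Delta(b,N)f^*g]_1$. *)

theory Defs
  imports "HOL-Complex_Analysis.Complex_Analysis" "HOL-Library.Poly_Mapping"
    "HOL-Combinatorics.Permutations" "HOL-Combinatorics.Transposition"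
begin

text \<open>Indices are 0-based: variables z_1..z_n (resp. x_1..x_n) of the paper
are the keys 0..n-1; tensor factors 1..n are positions 0..n-1; basis vectors v_1..v_N
are labelled 1..N.  A Laurent polynomial (in countably many variables, of which only
0..n-1 will be used) is an element of type lpoly: exponent vectors are finitely
supported maps nat to int.\<close>

type_synonym lpoly = "(nat \<Rightarrow>\<^sub>0 int) \<Rightarrow>\<^sub>0 complex"

definition var_pow :: "nat \<Rightarrow> int \<Rightarrow> lpoly" where
  "var_pow i e = Poly_Mapping.single (Poly_Mapping.single i e) 1"

definition in_vars :: "nat \<Rightarrow> lpoly \<Rightarrow> bool" where
  "in_vars n p \<longleftrightarrow> (\<forall>a\<in>Poly_Mapping.keys p. Poly_Mapping.keys a \<subseteq> {..<n})"

text \<open>underline k in {1..N} and overline k with k = underline k - N * overline k\<close>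
definition ul :: "nat \<Rightarrow> int \<Rightarrow> int" where
  "ul N k = (k - 1) mod int N + 1"
definition ol :: "nat \<Rightarrow> int \<Rightarrow> int" where
  "ol N k = (ul N k - k) div int N"

text \<open>Tensor indices: c i is the label of the basis vector in factor i (i < n).\<close>
definition tidx :: "nat \<Rightarrow> nat \<Rightarrow> (nat \<Rightarrow> nat) set" where
  "tidx N n = {c. (\<forall>i<n. c i \<in> {1..N}) \<and> (\<forall>i\<ge>n. c i = 0)}"

text \<open>An element of C[z^{+-1}] (x) V^{(x)n} is represented by the family of its components:
T c is the Laurent polynomial coefficient of v_{c 0} (x) ... (x) v_{c (n-1)}.\<close>
definition tspace :: "nat \<Rightarrow> nat \<Rightarrow> ((nat \<Rightarrow> nat) \<Rightarrow> lpoly) set" where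
  "tspace N n = {T. (\<forall>c. c \<notin> tidx N n \<longrightarrow> T c = 0) \<and> (\<forall>c. in_vars n (T c))}"

definition swap_exp :: "nat \<Rightarrow> nat \<Rightarrow> (nat \<Rightarrow>\<^sub>0 int) \<Rightarrow> (nat \<Rightarrow>\<^sub>0 int)" where
  "swap_exp i j a = (\<Sum>l\<in>Poly_Mapping.keys a. Poly_Mapping.single (Transposition.transpose i j l) (Poly_Mapping.lookup a l))"
definition Kswap :: "nat \<Rightarrow> nat \<Rightarrow> lpoly \<Rightarrow> lpoly" where
  "Kswap i j p = (\<Sum>a\<in>Poly_Mapping.keys p. Poly_Mapping.single (swap_exp i j a) (Poly_Mapping.lookup p a))"

definition Kt :: "nat \<Rightarrow> nat \<Rightarrow> ((nat \<Rightarrow> nat) \<Rightarrow> lpoly) \<Rightarrow> ((nat \<Rightarrow> nat) \<Rightarrow> lpoly)" where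
  "Kt i j T = (\<lambda>c. Kswap i j (T c))"
definition Pt :: "nat \<Rightarrow> nat \<Rightarrow> ((nat \<Rightarrow> nat) \<Rightarrow> lpoly) \<Rightarrow> ((nat \<Rightarrow> nat) \<Rightarrow> lpoly)" where
  "Pt i j T = (\<lambda>c. T (c \<circ> Transposition.transpose i j))"

definition Fspace :: "nat \<Rightarrow> nat \<Rightarrow> ((nat \<Rightarrow> nat) \<Rightarrow> lpoly) set" where
  "Fspace N n = {T \<in> tspace N n. \<forall>i<n. \<forall>j<n. i \<noteq> j \<longrightarrow> Kt i j T = - Pt i j T}"

definition decseqs :: "nat \<Rightarrow> (nat \<Rightarrow> int) set" where
  "decseqs n = {k. (\<forall>i j. i < j \<longrightarrow> j < n \<longrightarrow> k j < k i) \<and> (\<forall>i\<ge>n. k i = 0)}"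

definition uhat :: "nat \<Rightarrow> nat \<Rightarrow> (nat \<Rightarrow> int) \<Rightarrow> ((nat \<Rightarrow> nat) \<Rightarrow> lpoly)" where
  "uhat N n k = (\<lambda>c. \<Sum>w | w permutes {..<n}.
      if c = (\<lambda>i. if i < n then nat (ul N (k (w i))) else 0)
      then Poly_Mapping.single (\<Sum>i<n. Poly_Mapping.single i (ol N (k (w i)))) (of_int (sign w))
      else 0)"

definition ovec :: "nat \<Rightarrow> nat \<Rightarrow> int" where
  "ovec n i = (if i < n then - int i else 0)"

definition altdet :: "nat \<Rightarrow> (nat \<Rightarrow> int) \<Rightarrow> lpoly" where
  "altdet n e = (\<Sum>\<sigma> | \<sigma> permutes {..<n}. of_int (sign \<sigma>) * (\<Prod>i<n. var_pow i (e (\<sigma> i))))"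

text \<open>s_l = det(x_i^{l_j+n-j}) / det(x_i^{n-j}) (exact quotient in the Laurent polynomial ring)\<close>
definition schur :: "nat \<Rightarrow> (nat \<Rightarrow> int) \<Rightarrow> lpoly" where
  "schur n l = (THE s. s * altdet n (\<lambda>j. int n - 1 - int j) = altdet n (\<lambda>j. l j + int n - 1 - int j))"

definition lscale :: "complex \<Rightarrow> lpoly \<Rightarrow> lpoly" where
  "lscale a p = Poly_Mapping.map (\<lambda>x. a * x) p"

text \<open>Omega: the linear map sending hat u_k to s_{k-o}\<close>
definition Omega :: "nat \<Rightarrow> nat \<Rightarrow> ((nat \<Rightarrow> nat) \<Rightarrow> lpoly) \<Rightarrow> lpoly" where
  "Omega N n T = (THE P. \<exists>coef :: (nat \<Rightarrow> int) \<Rightarrow> complex.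
      finite {k. coef k \<noteq> 0} \<and> {k. coef k \<noteq> 0} \<subseteq> decseqs n \<and>
      T = (\<lambda>c. \<Sum>k | coef k \<noteq> 0. lscale (coef k) (uhat N n k c)) \<and>
      P = (\<Sum>k | coef k \<noteq> 0. lscale (coef k) (schur n (\<lambda>i. k i - ovec n i))))"

definition leval :: "lpoly \<Rightarrow> (nat \<Rightarrow> complex) \<Rightarrow> complex" where
  "leval p w = (\<Sum>a\<in>Poly_Mapping.keys p. Poly_Mapping.lookup p a *
      (\<Prod>i\<in>Poly_Mapping.keys a. w i powi Poly_Mapping.lookup a i))"
definition leval_bar_inv :: "lpoly \<Rightarrow> (nat \<Rightarrow> complex) \<Rightarrow> complex" where
  "leval_bar_inv p w = (\<Sum>a\<in>Poly_Mapping.keys p. cnj (Poly_Mapping.lookup p a) *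
      (\<Prod>i\<in>Poly_Mapping.keys a. inverse (w i) powi Poly_Mapping.lookup a i))"

fun torus_int :: "nat \<Rightarrow> ((nat \<Rightarrow> complex) \<Rightarrow> complex) \<Rightarrow> complex" where
  "torus_int 0 h = h (\<lambda>_. 1)"
| "torus_int (Suc m) h = contour_integral (circlepath 0 1)
      (\<lambda>z. torus_int m (\<lambda>w. h (w(m := z))) / (2 * of_real pi * \<i> * z))"

definition ip_z :: "nat \<Rightarrow> nat \<Rightarrow> nat \<Rightarrow> ((nat \<Rightarrow> nat) \<Rightarrow> lpoly) \<Rightarrow> ((nat \<Rightarrow> nat) \<Rightarrow> lpoly) \<Rightarrow> complex" where
  "ip_z b N n F G = inverse (fact n) * torus_int n (\<lambda>w.
      (\<Prod>i<n. \<Prod>j\<in>{..<n} - {i}. (1 - w i * inverse (w j)) ^ b) *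
      (\<Sum>c\<in>tidx N n. leval_bar_inv (F c) w * leval (G c) w))"

definition lstar :: "lpoly \<Rightarrow> lpoly" where
  "lstar p = (\<Sum>a\<in>Poly_Mapping.keys p. Poly_Mapping.single (- a) (cnj (Poly_Mapping.lookup p a)))"

definition const_term :: "lpoly \<Rightarrow> complex" where
  "const_term h = Poly_Mapping.lookup h 0"

definition Delta :: "nat \<Rightarrow> nat \<Rightarrow> nat \<Rightarrow> lpoly" where
  "Delta b N n = (\<Prod>i<n. \<Prod>j\<in>{..<n} - {i}.
      (1 - var_pow i (int N) * var_pow j (- int N)) ^ b * (1 - var_pow i 1 * var_pow j (-1)))"

definition ip_x :: "nat \<Rightarrow> nat \<Rightarrow> nat \<Rightarrow> lpoly \<Rightarrow> lpoly \<Rightarrow> complex" where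
  "ip_x b N n f g = inverse (fact n) * const_term (Delta b N n * lstar f * g)"

end

theory Submission
  imports Defs
begin

lemma pm_expand_superset:
  fixes p :: "'a \<Rightarrow>\<^sub>0 'b::comm_monoid_add"
  assumes "finite S" "Poly_Mapping.keys p \<subseteq> S"
  shows "p = (\<Sum>a\<in>S. Poly_Mapping.single a (Poly_Mapping.lookup p a))"
proof (rule poly_mapping_eqI)
  fix x
  have "Poly_Mapping.lookup (\<Sum>a\<in>S. Poly_Mapping.single a (Poly_Mapping.lookup p a)) x
      = (\<Sum>a\<in>S. if a = x then Poly_Mapping.lookup p a else 0)"
    by (simp add: lookup_sum lookup_single when_def)
  also have "\<dots> = Poly_Mapping.lookup p x"
    using assms by (auto simp: sum.delta' in_keys_iff)
  finally show "Poly_Mapping.lookup p x = Poly_Mapping.lookup (\<Sum>a\<in>S. Poly_Mapping.single a (Poly_Mapping.lookup p a)) x" by simp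
qed

lemma pm_expand:
  fixes p :: "'a \<Rightarrow>\<^sub>0 'b::comm_monoid_add"
  shows "p = (\<Sum>a\<in>Poly_Mapping.keys p. Poly_Mapping.single a (Poly_Mapping.lookup p a))"
  by (rule pm_expand_superset) auto

lemma pm_mult_expand:
  fixes p q :: "'a::comm_monoid_add \<Rightarrow>\<^sub>0 'b::comm_semiring_0"
  shows "p * q = (\<Sum>a\<in>Poly_Mapping.keys p. \<Sum>b\<in>Poly_Mapping.keys q.
     Poly_Mapping.single a (Poly_Mapping.lookup p a) * Poly_Mapping.single b (Poly_Mapping.lookup q b))"
proof -
  have "p * q = (\<Sum>a\<in>Poly_Mapping.keys p. Poly_Mapping.single a (Poly_Mapping.lookup p a)) *
     (\<Sum>b\<in>Poly_Mapping.keys q. Poly_Mapping.single b (Poly_Mapping.lookup q b))"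
    using pm_expand[of p] pm_expand[of q] by simp
  then show ?thesis by (simp add: sum_product)
qed

lemma hom_sum_gen:
  assumes add: "\<And>p q. \<phi> (p + q) = \<phi> p + \<phi> q" and z: "\<phi> 0 = 0"
  shows "\<phi> (sum f S) = (\<Sum>x\<in>S. \<phi> (f x))"
proof (cases "finite S")
  case True then show ?thesis by (induction S rule: finite_induct) (auto simp: z add)
next
  case False then show ?thesis by (simp add: z)
qed

lemma hom_mult_gen:
  fixes \<phi> :: "('a::comm_monoid_add \<Rightarrow>\<^sub>0 'b::comm_semiring_0) \<Rightarrow> 'c::comm_semiring_0"
  assumes add: "\<And>p q. \<phi> (p + q) = \<phi> p + \<phi> q" and z: "\<phi> 0 = 0"
    and sing: "\<And>a b c d. \<phi> (Poly_Mapping.single a c * Poly_Mapping.single b d)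
        = \<phi> (Poly_Mapping.single a c) * \<phi> (Poly_Mapping.single b d)"
  shows "\<phi> (p * q) = \<phi> p * \<phi> q"
proof -
  have "\<phi> (p * q) = (\<Sum>a\<in>Poly_Mapping.keys p. \<Sum>b\<in>Poly_Mapping.keys q.
     \<phi> (Poly_Mapping.single a (Poly_Mapping.lookup p a)) * \<phi> (Poly_Mapping.single b (Poly_Mapping.lookup q b)))"
    by (subst pm_mult_expand) (simp add: hom_sum_gen[OF add z] sing)
  also have "\<dots> = \<phi> (\<Sum>a\<in>Poly_Mapping.keys p. Poly_Mapping.single a (Poly_Mapping.lookup p a)) *
      \<phi> (\<Sum>b\<in>Poly_Mapping.keys q. Poly_Mapping.single b (Poly_Mapping.lookup q b))"
    by (simp add: hom_sum_gen[OF add z] sum_product)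
  also have "\<dots> = \<phi> p * \<phi> q" using pm_expand[of p] pm_expand[of q] by simp
  finally show ?thesis .
qed

lemma hom_prod_gen:
  fixes \<phi> :: "('a::comm_monoid_add \<Rightarrow>\<^sub>0 'b::comm_semiring_1) \<Rightarrow> 'c::comm_semiring_1"
  assumes mult: "\<And>p q. \<phi> (p * q) = \<phi> p * \<phi> q" and one: "\<phi> 1 = 1"
  shows "\<phi> (prod f S) = (\<Prod>x\<in>S. \<phi> (f x))"
proof (cases "finite S")
  case True then show ?thesis by (induction S rule: finite_induct) (auto simp: one mult)
next
  case False then show ?thesis by (simp add: one)
qed

lemma hom_power_gen:
  fixes \<phi> :: "('a::comm_monoid_add \<Rightarrow>\<^sub>0 'b::comm_semiring_1) \<Rightarrow> 'c::comm_semiring_1"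
  assumes mult: "\<And>p q. \<phi> (p * q) = \<phi> p * \<phi> q" and one: "\<phi> 1 = 1"
  shows "\<phi> (p ^ k) = \<phi> p ^ k"
  by (induction k) (auto simp: one mult)

definition kmap :: "('a \<Rightarrow> 'b) \<Rightarrow> ('a \<Rightarrow>\<^sub>0 'c::comm_monoid_add) \<Rightarrow> ('b \<Rightarrow>\<^sub>0 'c)" where
  "kmap h p = (\<Sum>a\<in>Poly_Mapping.keys p. Poly_Mapping.single (h a) (Poly_Mapping.lookup p a))"

lemma kmap_superset:
  assumes "finite S" "Poly_Mapping.keys p \<subseteq> S"
  shows "kmap h p = (\<Sum>a\<in>S. Poly_Mapping.single (h a) (Poly_Mapping.lookup p a))"
  unfolding kmap_def using assms
  by (intro sum.mono_neutral_left) (auto simp: in_keys_iff)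

lemma kmap_zero [simp]: "kmap h 0 = 0"
  by (simp add: kmap_def)

lemma kmap_single [simp]: "kmap h (Poly_Mapping.single a c) = Poly_Mapping.single (h a) c"
  by (simp add: kmap_def)

lemma kmap_add: "kmap h (p + q) = kmap h p + kmap h q"
proof -
  let ?S = "Poly_Mapping.keys p \<union> Poly_Mapping.keys q"
  have "kmap h (p + q) = (\<Sum>a\<in>?S. Poly_Mapping.single (h a) (Poly_Mapping.lookup (p + q) a))"
    by (rule kmap_superset) (auto dest: set_mp[OF keys_add])
  also have "\<dots> = (\<Sum>a\<in>?S. Poly_Mapping.single (h a) (Poly_Mapping.lookup p a))
     + (\<Sum>a\<in>?S. Poly_Mapping.single (h a) (Poly_Mapping.lookup q a))"
    by (simp add: lookup_add single_add sum.distrib)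
  also have "\<dots> = kmap h p + kmap h q"
    by (simp add: kmap_superset[symmetric])
  finally show ?thesis .
qed

lemma kmap_sum: "kmap h (sum f S) = (\<Sum>x\<in>S. kmap h (f x))"
  by (rule hom_sum_gen) (auto simp: kmap_add)

lemma kmap_uminus:
  fixes p :: "'a \<Rightarrow>\<^sub>0 'c::ab_group_add"
  shows "kmap h (- p) = - kmap h p"
  by (simp add: kmap_def single_uminus sum_negf)

lemma kmap_diff:
  fixes p :: "'a \<Rightarrow>\<^sub>0 'c::ab_group_add"
  shows "kmap h (p - q) = kmap h p - kmap h q"
  using kmap_add[of h p "- q"] by (simp add: kmap_uminus)

lemma kmap_mult:
  fixes p q :: "'a::comm_monoid_add \<Rightarrow>\<^sub>0 'c::comm_semiring_0" and h :: "'a \<Rightarrow> 'b::comm_monoid_add"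
  assumes "\<And>a b. h (a + b) = h a + h b"
  shows "kmap h (p * q) = kmap h p * kmap h q"
  by (rule hom_mult_gen[where \<phi>="kmap h"]) (auto simp: kmap_add mult_single assms)

lemma kmap_one:
  assumes "h 0 = 0"
  shows "kmap h (1 :: 'a::comm_monoid_add \<Rightarrow>\<^sub>0 'c::comm_semiring_1) = 1"
  using kmap_single[of h 0 "1::'c"] assms by simp

lemma lookup_kmap_inj:
  assumes "inj h"
  shows "Poly_Mapping.lookup (kmap h p) (h a) = Poly_Mapping.lookup p a"
proof -
  have "Poly_Mapping.lookup (kmap h p) (h a) = (\<Sum>x\<in>Poly_Mapping.keys p. if x = a then Poly_Mapping.lookup p x else 0)"
    unfolding kmap_def lookup_sum lookup_single when_def
    using injD[OF assms] by (intro sum.cong) auto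
  also have "\<dots> = Poly_Mapping.lookup p a" by (auto simp: sum.delta in_keys_iff)
  finally show ?thesis .
qed

lemma lookup_kmap_notin:
  assumes "x \<notin> range h"
  shows "Poly_Mapping.lookup (kmap h p) x = 0"
  unfolding kmap_def lookup_sum lookup_single when_def
  using assms by (intro sum.neutral) auto

definition mon :: "(nat \<Rightarrow>\<^sub>0 int) \<Rightarrow> (nat \<Rightarrow> complex) \<Rightarrow> complex" where
  "mon a w = (\<Prod>i\<in>Poly_Mapping.keys a. w i powi Poly_Mapping.lookup a i)"

lemma mon_superset:
  assumes "finite S" "Poly_Mapping.keys a \<subseteq> S"
  shows "mon a w = (\<Prod>i\<in>S. w i powi Poly_Mapping.lookup a i)"
  unfolding mon_def using assms
  by (intro prod.mono_neutral_left) (auto simp: in_keys_iff)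

lemma mon_add:
  assumes "\<forall>i. w i \<noteq> 0"
  shows "mon (a + b) w = mon a w * mon b w"
proof -
  let ?S = "Poly_Mapping.keys a \<union> Poly_Mapping.keys b"
  have "mon (a + b) w = (\<Prod>i\<in>?S. w i powi Poly_Mapping.lookup (a + b) i)"
    by (rule mon_superset) (auto dest: set_mp[OF keys_add])
  also have "\<dots> = (\<Prod>i\<in>?S. w i powi Poly_Mapping.lookup a i) * (\<Prod>i\<in>?S. w i powi Poly_Mapping.lookup b i)"
    using assms by (simp add: lookup_add power_int_add prod.distrib)
  also have "\<dots> = mon a w * mon b w"
    by (simp add: mon_superset[symmetric])
  finally show ?thesis .
qed

lemma mon_zero [simp]: "mon 0 w = 1" by (simp add: mon_def)

lemma mon_single [simp]: "mon (Poly_Mapping.single i e) w = w i powi e"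
  by (simp add: mon_def)

lemma leval_superset:
  assumes "finite S" "Poly_Mapping.keys p \<subseteq> S"
  shows "leval p w = (\<Sum>a\<in>S. Poly_Mapping.lookup p a * mon a w)"
  unfolding leval_def mon_def[symmetric] using assms
  by (intro sum.mono_neutral_left) (auto simp: in_keys_iff)

lemma leval_add: "leval (p + q) w = leval p w + leval q w"
proof -
  let ?S = "Poly_Mapping.keys p \<union> Poly_Mapping.keys q"
  have "leval (p + q) w = (\<Sum>a\<in>?S. Poly_Mapping.lookup (p + q) a * mon a w)"
    by (rule leval_superset) (auto dest: set_mp[OF keys_add])
  also have "\<dots> = (\<Sum>a\<in>?S. Poly_Mapping.lookup p a * mon a w) + (\<Sum>a\<in>?S. Poly_Mapping.lookup q a * mon a w)"
    by (simp add: lookup_add distrib_right sum.distrib)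
  also have "\<dots> = leval p w + leval q w"
    by (simp add: leval_superset[symmetric])
  finally show ?thesis .
qed

lemma leval_zero [simp]: "leval 0 w = 0" by (simp add: leval_def)

lemma leval_single [simp]: "leval (Poly_Mapping.single a c) w = c * mon a w"
  by (simp add: leval_def mon_def)

lemma leval_sum: "leval (sum f S) w = (\<Sum>x\<in>S. leval (f x) w)"
  by (rule hom_sum_gen[where \<phi>="\<lambda>p. leval p w"]) (auto simp: leval_add)

lemma leval_mult:
  assumes "\<forall>i. w i \<noteq> 0"
  shows "leval (p * q) w = leval p w * leval q w"
  by (rule hom_mult_gen[where \<phi>="\<lambda>p. leval p w"]) (auto simp: leval_add mult_single mon_add[OF assms])

lemma leval_one [simp]: "leval 1 w = 1"
  using leval_single[of 0 1 w] by simp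

lemma leval_prod:
  assumes "\<forall>i. w i \<noteq> 0"
  shows "leval (prod f S) w = (\<Prod>x\<in>S. leval (f x) w)"
  by (rule hom_prod_gen[where \<phi>="\<lambda>p. leval p w"]) (auto simp: leval_mult[OF assms])

lemma leval_power:
  assumes "\<forall>i. w i \<noteq> 0"
  shows "leval (p ^ k) w = leval p w ^ k"
  by (rule hom_power_gen[where \<phi>="\<lambda>p. leval p w"]) (auto simp: leval_mult[OF assms])

lemma leval_uminus: "leval (- p) w = - leval p w"
  using leval_add[of p "- p" w] by (simp add: eq_neg_iff_add_eq_0 add.commute)

lemma leval_diff: "leval (p - q) w = leval p w - leval q w"
  using leval_add[of p "- q" w] by (simp add: leval_uminus)

lemma leval_var_pow [simp]: "leval (var_pow i e) w = w i powi e"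
  by (simp add: var_pow_def)

lemma var_pow_add: "var_pow i (e + f) = var_pow i e * var_pow i f"
  by (simp add: var_pow_def mult_single single_add)

lemma var_pow_0 [simp]: "var_pow i 0 = 1"
  by (simp add: var_pow_def)

lemma lookup_lstar: "Poly_Mapping.lookup (lstar p) x = cnj (Poly_Mapping.lookup p (- x))"
proof -
  have "Poly_Mapping.lookup (lstar p) x = (\<Sum>a\<in>Poly_Mapping.keys p. if a = - x then cnj (Poly_Mapping.lookup p a) else 0)"
    unfolding lstar_def lookup_sum lookup_single when_def by (intro sum.cong) auto
  also have "\<dots> = cnj (Poly_Mapping.lookup p (- x))" by (auto simp: sum.delta in_keys_iff)
  finally show ?thesis .
qed

lemma lstar_add: "lstar (p + q) = lstar p + lstar q"
  by (rule poly_mapping_eqI) (simp add: lookup_lstar lookup_add)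

lemma lstar_zero [simp]: "lstar 0 = 0"
  by (rule poly_mapping_eqI) (simp add: lookup_lstar)

lemma lstar_single [simp]: "lstar (Poly_Mapping.single a c) = Poly_Mapping.single (- a) (cnj c)"
  by (rule poly_mapping_eqI) (auto simp: lookup_lstar lookup_single when_def)

lemma lstar_mult: "lstar (p * q) = lstar p * lstar q"
  by (rule hom_mult_gen[where \<phi>="lstar"]) (auto simp: lstar_add mult_single)

lemma lstar_one [simp]: "lstar 1 = 1"
  using lstar_single[of 0 1] by simp

lemma lstar_sum: "lstar (sum f S) = (\<Sum>x\<in>S. lstar (f x))"
  by (rule hom_sum_gen) (auto simp: lstar_add)

lemma lstar_prod: "lstar (prod f S) = (\<Prod>x\<in>S. lstar (f x))"
  by (rule hom_prod_gen) (auto simp: lstar_mult)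

lemma lstar_power: "lstar (p ^ k) = lstar p ^ k"
  by (rule hom_power_gen) (auto simp: lstar_mult)

lemma lstar_uminus: "lstar (- p) = - lstar p"
  by (rule poly_mapping_eqI) (simp add: lookup_lstar)

lemma lstar_diff: "lstar (p - q) = lstar p - lstar q"
  by (rule poly_mapping_eqI) (simp add: lookup_lstar lookup_minus)

lemma lstar_var_pow [simp]: "lstar (var_pow i e) = var_pow i (- e)"
  by (simp add: var_pow_def single_uminus)

lemma lstar_lstar [simp]: "lstar (lstar p) = p"
  by (rule poly_mapping_eqI) (simp add: lookup_lstar)

lemma lookup_lscale: "Poly_Mapping.lookup (lscale c p) x = c * Poly_Mapping.lookup p x"
  by (simp add: lscale_def map.rep_eq when_def)

lemma lscale_conv: "lscale c p = Poly_Mapping.single 0 c * p"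
  by (simp add: lscale_def mult_map_scale_conv_mult)

lemma lstar_scale: "lstar (lscale c p) = lscale (cnj c) (lstar p)"
  by (rule poly_mapping_eqI) (simp add: lookup_lstar lookup_lscale)

lemma mon_uminus:
  "mon (- a) w = (\<Prod>i\<in>Poly_Mapping.keys a. inverse (w i) powi Poly_Mapping.lookup a i)"
  unfolding mon_def by (simp add: power_int_minus power_int_inverse)

lemma leval_lstar: "leval (lstar p) w = leval_bar_inv p w"
  unfolding lstar_def leval_sum leval_bar_inv_def
  by (simp add: mon_uminus)

lemma swap_exp_kmap: "swap_exp i j = kmap (Transposition.transpose i j)"
  by (simp add: fun_eq_iff swap_exp_def kmap_def)

lemma Kswap_kmap: "Kswap i j = kmap (swap_exp i j)"
  by (simp add: fun_eq_iff Kswap_def kmap_def)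

lemma lookup_swap_exp: "Poly_Mapping.lookup (swap_exp i j a) l = Poly_Mapping.lookup a (Transposition.transpose i j l)"
  using lookup_kmap_inj[of "Transposition.transpose i j" a "Transposition.transpose i j l"]
  by (simp add: swap_exp_kmap)

lemma swap_exp_swap_exp [simp]: "swap_exp i j (swap_exp i j a) = a"
  by (rule poly_mapping_eqI) (simp add: lookup_swap_exp)

lemma inj_swap_exp: "inj (swap_exp i j)"
  by (metis injI swap_exp_swap_exp)

lemma swap_exp_add: "swap_exp i j (a + b) = swap_exp i j a + swap_exp i j b"
  by (simp add: swap_exp_kmap kmap_add)

lemma lookup_Kswap: "Poly_Mapping.lookup (Kswap i j p) (swap_exp i j a) = Poly_Mapping.lookup p a"
  by (simp add: Kswap_kmap lookup_kmap_inj inj_swap_exp)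

section \<open>Torus integrals\<close>

lemma circ_mon:
  "((\<lambda>z. z powi k / (2 * of_real pi * \<i> * z)) has_contour_integral (if k = 0 then 1 else 0)) (circlepath 0 1)"
proof (cases "k = 0")
  case True
  have "((\<lambda>u. (\<lambda>_. 1 / (2 * of_real pi * \<i>)) u / (u - 0)) has_contour_integral
      (2 * of_real pi * \<i> * (1 / (2 * of_real pi * \<i>)))) (circlepath 0 1)"
    by (rule Cauchy_integral_circlepath_simple) auto
  then show ?thesis using True
    by (rule_tac has_contour_integral_eq) (auto simp: field_simps)
next
  case False
  have "((\<lambda>z. z powi (k - 1) / (2 * of_real pi * \<i>)) has_contour_integral 0) (circlepath 0 1)"
  proof (rule Cauchy_theorem_primitive[where S="- {0}" and f="\<lambda>z. z powi k / (of_int k * (2 * of_real pi * \<i>))"])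
    fix x :: complex assume "x \<in> - {0}"
    then show "((\<lambda>z. z powi k / (of_int k * (2 * of_real pi * \<i>))) has_field_derivative
        x powi (k - 1) / (2 * of_real pi * \<i>)) (at x within - {0})"
      using False by (auto intro!: derivative_eq_intros simp: field_simps)
  qed auto
  then have "((\<lambda>z. z powi k / (2 * of_real pi * \<i> * z)) has_contour_integral 0) (circlepath 0 1)"
  proof (rule has_contour_integral_eq)
    fix x assume "x \<in> path_image (circlepath (0::complex) 1)"
    then have "x \<noteq> 0" by auto
    then show "x powi (k - 1) / (2 * of_real pi * \<i>) = x powi k / (2 * of_real pi * \<i> * x)"
      using False by (simp add: power_int_diff field_simps)
  qed
  then show ?thesis using False by simp
qed

lemma torus_cong:
  assumes "\<And>w. (\<forall>i. w i \<noteq> 0) \<Longrightarrow> h1 w = h2 w"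
  shows "torus_int m h1 = torus_int m h2"
  using assms
proof (induction m arbitrary: h1 h2)
  case 0 then show ?case by simp
next
  case (Suc m)
  have "(\<lambda>z. torus_int m (\<lambda>w. h1 (w(m := z))) / (2 * of_real pi * \<i> * z)) =
        (\<lambda>z. torus_int m (\<lambda>w. h2 (w(m := z))) / (2 * of_real pi * \<i> * z))"
  proof
    fix z :: complex
    show "torus_int m (\<lambda>w. h1 (w(m := z))) / (2 * of_real pi * \<i> * z) =
        torus_int m (\<lambda>w. h2 (w(m := z))) / (2 * of_real pi * \<i> * z)"
    proof (cases "z = 0")
      case False
      have "torus_int m (\<lambda>w. h1 (w(m := z))) = torus_int m (\<lambda>w. h2 (w(m := z)))"
        by (rule Suc.IH) (use False Suc.prems in auto)
      then show ?thesis by simp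
    qed simp
  qed
  then show ?case by simp
qed

definition mon_rest :: "nat \<Rightarrow> (nat \<Rightarrow>\<^sub>0 int) \<Rightarrow> (nat \<Rightarrow> complex) \<Rightarrow> complex" where
  "mon_rest m a g = (\<Prod>i\<in>Poly_Mapping.keys a - {m}. g i powi Poly_Mapping.lookup a i)"

lemma mon_upd: "mon a (g(m := z)) = mon_rest m a g * z powi Poly_Mapping.lookup a m"
proof (cases "m \<in> Poly_Mapping.keys a")
  case True
  then have "mon a (g(m := z)) = (g(m := z)) m powi Poly_Mapping.lookup a m *
     (\<Prod>i\<in>Poly_Mapping.keys a - {m}. (g(m := z)) i powi Poly_Mapping.lookup a i)"
    unfolding mon_def by (subst prod.remove[of _ m]) auto
  also have "(\<Prod>i\<in>Poly_Mapping.keys a - {m}. (g(m := z)) i powi Poly_Mapping.lookup a i) = mon_rest m a g"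
    unfolding mon_rest_def by (intro prod.cong) auto
  finally show ?thesis by (simp only: fun_upd_same mult.commute)
next
  case False
  then show ?thesis unfolding mon_def mon_rest_def
    by (auto simp: in_keys_iff intro!: prod.cong)
qed

lemma mon_rest_eq: "Poly_Mapping.lookup a m = 0 \<Longrightarrow> mon_rest m a g = mon a g"
  unfolding mon_rest_def mon_def by (intro prod.cong) (auto simp: in_keys_iff)

lemma torus_main:
  assumes "\<forall>i. g i \<noteq> 0"
  shows "torus_int m (\<lambda>w. leval p (\<lambda>i. if i < m then w i else g i)) =
    (\<Sum>a\<in>{a\<in>Poly_Mapping.keys p. \<forall>i<m. Poly_Mapping.lookup a i = 0}. Poly_Mapping.lookup p a * mon a g)"
  using assms
proof (induction m arbitrary: g)
  case 0
  then show ?case by (simp add: leval_def mon_def)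
next
  case (Suc m)
  let ?K = "{a\<in>Poly_Mapping.keys p. \<forall>i<m. Poly_Mapping.lookup a i = 0}"
  have fin: "finite ?K" by simp
  have eq1: "(\<lambda>w. leval p (\<lambda>i. if i < Suc m then w i else g i)) (w(m := z)) =
       leval p (\<lambda>i. if i < m then w i else (g(m := z)) i)" for w z
    by (rule arg_cong[where f="leval p"]) auto
  have integrand: "(\<lambda>z. torus_int m (\<lambda>w. (\<lambda>w. leval p (\<lambda>i. if i < Suc m then w i else g i)) (w(m := z)))
      / (2 * of_real pi * \<i> * z)) =
    (\<lambda>z. \<Sum>a\<in>?K. Poly_Mapping.lookup p a * mon_rest m a g * (z powi Poly_Mapping.lookup a m / (2 * of_real pi * \<i> * z)))"
  proof
    fix z :: complex
    show "torus_int m (\<lambda>w. (\<lambda>w. leval p (\<lambda>i. if i < Suc m then w i else g i)) (w(m := z)))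
      / (2 * of_real pi * \<i> * z) =
      (\<Sum>a\<in>?K. Poly_Mapping.lookup p a * mon_rest m a g * (z powi Poly_Mapping.lookup a m / (2 * of_real pi * \<i> * z)))"
    proof (cases "z = 0")
      case True then show ?thesis by simp
    next
      case False
      then have "\<forall>i. (g(m := z)) i \<noteq> 0" using Suc.prems by auto
      then have "torus_int m (\<lambda>w. leval p (\<lambda>i. if i < m then w i else (g(m := z)) i)) =
        (\<Sum>a\<in>?K. Poly_Mapping.lookup p a * mon a (g(m := z)))"
        by (rule Suc.IH)
      then show ?thesis
        by (simp only: eq1 mon_upd sum_divide_distrib) (simp add: field_simps)
    qed
  qed
  have "((\<lambda>z. \<Sum>a\<in>?K. Poly_Mapping.lookup p a * mon_rest m a g * (z powi Poly_Mapping.lookup a m / (2 * of_real pi * \<i> * z)))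
     has_contour_integral (\<Sum>a\<in>?K. Poly_Mapping.lookup p a * mon_rest m a g * (if Poly_Mapping.lookup a m = 0 then 1 else 0))) (circlepath 0 1)"
    by (intro has_contour_integral_sum fin has_contour_integral_lmul circ_mon)
  then have "torus_int (Suc m) (\<lambda>w. leval p (\<lambda>i. if i < Suc m then w i else g i)) =
     (\<Sum>a\<in>?K. Poly_Mapping.lookup p a * mon_rest m a g * (if Poly_Mapping.lookup a m = 0 then 1 else 0))"
    by (simp only: torus_int.simps integrand contour_integral_unique)
  also have "\<dots> = (\<Sum>a\<in>?K. if Poly_Mapping.lookup a m = 0 then Poly_Mapping.lookup p a * mon a g else 0)"
    by (intro sum.cong) (auto simp: mon_rest_eq)
  also have "\<dots> = (\<Sum>a\<in>{a\<in>Poly_Mapping.keys p. \<forall>i<Suc m. Poly_Mapping.lookup a i = 0}. Poly_Mapping.lookup p a * mon a g)"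
    by (subst sum.inter_filter[symmetric]) (auto intro!: sum.cong simp: less_Suc_eq)
  finally show ?case .
qed

lemma keys_add_exp: "Poly_Mapping.keys (a + b :: nat \<Rightarrow>\<^sub>0 int) \<subseteq> Poly_Mapping.keys a \<union> Poly_Mapping.keys b"
  by (rule keys_add)

lemma in_vars_zero [simp]: "in_vars n 0" by (simp add: in_vars_def)

lemma in_vars_single: "Poly_Mapping.keys a \<subseteq> {..<n} \<Longrightarrow> in_vars n (Poly_Mapping.single a c)"
  by (simp add: in_vars_def)

lemma in_vars_one [simp]: "in_vars n 1" by (simp add: in_vars_def)

lemma in_vars_var_pow: "i < n \<Longrightarrow> in_vars n (var_pow i e)"
  by (simp add: in_vars_def var_pow_def)

lemma in_vars_add: "in_vars n p \<Longrightarrow> in_vars n q \<Longrightarrow> in_vars n (p + q)"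
  unfolding in_vars_def
proof
  fix a assume "\<forall>a\<in>Poly_Mapping.keys p. Poly_Mapping.keys a \<subseteq> {..<n}"
    "\<forall>a\<in>Poly_Mapping.keys q. Poly_Mapping.keys a \<subseteq> {..<n}" "a \<in> Poly_Mapping.keys (p + q)"
  moreover have "a \<in> Poly_Mapping.keys p \<union> Poly_Mapping.keys q"
    using calculation(3) keys_add[of p q] by (rule subsetD[rotated])
  ultimately show "Poly_Mapping.keys a \<subseteq> {..<n}" by auto
qed

lemma in_vars_uminus: "in_vars n p \<Longrightarrow> in_vars n (- p)"
  unfolding in_vars_def by (simp add: keys_minus)

lemma in_vars_diff: "in_vars n p \<Longrightarrow> in_vars n q \<Longrightarrow> in_vars n (p - q)"
  using in_vars_add[of n p "- q"] in_vars_uminus[of n q] by simp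

lemma in_vars_mult: "in_vars n p \<Longrightarrow> in_vars n q \<Longrightarrow> in_vars n (p * q)"
  unfolding in_vars_def
proof
  fix a assume p: "\<forall>a\<in>Poly_Mapping.keys p. Poly_Mapping.keys a \<subseteq> {..<n}"
    and q: "\<forall>a\<in>Poly_Mapping.keys q. Poly_Mapping.keys a \<subseteq> {..<n}"
    and a: "a \<in> Poly_Mapping.keys (p * q)"
  have "a \<in> {x + y |x y. x \<in> Poly_Mapping.keys p \<and> y \<in> Poly_Mapping.keys q}"
    using a keys_mult[of p q] by (rule subsetD[rotated])
  then obtain x y where xy: "a = x + y" "x \<in> Poly_Mapping.keys p" "y \<in> Poly_Mapping.keys q"
    by auto
  have "Poly_Mapping.keys a \<subseteq> Poly_Mapping.keys x \<union> Poly_Mapping.keys y"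
    unfolding xy(1) by (rule keys_add)
  then show "Poly_Mapping.keys a \<subseteq> {..<n}" using p q xy by auto
qed

lemma in_vars_sum: "(\<And>x. x \<in> S \<Longrightarrow> in_vars n (f x)) \<Longrightarrow> in_vars n (sum f S)"
  by (induction S rule: infinite_finite_induct) (auto intro: in_vars_add)

lemma in_vars_prod: "(\<And>x. x \<in> S \<Longrightarrow> in_vars n (f x)) \<Longrightarrow> in_vars n (prod f S)"
  by (induction S rule: infinite_finite_induct) (auto intro: in_vars_mult)

lemma in_vars_power: "in_vars n p \<Longrightarrow> in_vars n (p ^ k)"
  by (induction k) (auto intro: in_vars_mult)

lemma in_vars_lstar: "in_vars n p \<Longrightarrow> in_vars n (lstar p)"
  unfolding in_vars_def
proof
  fix a assume p: "\<forall>a\<in>Poly_Mapping.keys p. Poly_Mapping.keys a \<subseteq> {..<n}"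
    and a: "a \<in> Poly_Mapping.keys (lstar p)"
  then have "- a \<in> Poly_Mapping.keys p" by (simp add: in_keys_iff lookup_lstar)
  then show "Poly_Mapping.keys a \<subseteq> {..<n}" using p by (metis keys_minus)
qed

lemma in_vars_lscale: "in_vars n p \<Longrightarrow> in_vars n (lscale c p)"
  unfolding in_vars_def by (auto simp: in_keys_iff lookup_lscale)

lemma mon_in_vars: "Poly_Mapping.keys a \<subseteq> {..<n} \<Longrightarrow> (\<forall>i<n. w i = w' i) \<Longrightarrow> mon a w = mon a w'"
  unfolding mon_def by (intro prod.cong) auto

lemma leval_in_vars: "in_vars n p \<Longrightarrow> (\<forall>i<n. w i = w' i) \<Longrightarrow> leval p w = leval p w'"
  unfolding leval_def mon_def[symmetric] in_vars_def
  by (intro sum.cong refl) (metis mon_in_vars)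

lemma torus_const:
  assumes "in_vars m p"
  shows "torus_int m (\<lambda>w. leval p w) = const_term p"
proof -
  have "torus_int m (\<lambda>w. leval p w) = torus_int m (\<lambda>w. leval p (\<lambda>i. if i < m then w i else 1))"
    by (rule arg_cong[where f="torus_int m"]) (auto intro!: leval_in_vars[OF assms])
  also have "\<dots> = (\<Sum>a\<in>{a\<in>Poly_Mapping.keys p. \<forall>i<m. Poly_Mapping.lookup a i = 0}. Poly_Mapping.lookup p a * mon a (\<lambda>_. 1))"
    by (rule torus_main) simp
  also have "{a\<in>Poly_Mapping.keys p. \<forall>i<m. Poly_Mapping.lookup a i = 0} = Poly_Mapping.keys p \<inter> {0}"
  proof -
    have "a = 0" if "a \<in> Poly_Mapping.keys p" "\<forall>i<m. Poly_Mapping.lookup a i = 0" for a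
    proof (rule poly_mapping_eqI)
      fix i
      have ka: "Poly_Mapping.keys a \<subseteq> {..<m}" using that(1) assms unfolding in_vars_def by blast
      show "Poly_Mapping.lookup a i = Poly_Mapping.lookup 0 i"
      proof (cases "i < m")
        case True then show ?thesis using that(2) by simp
      next
        case False then have "i \<notin> Poly_Mapping.keys a" using ka by auto
        then show ?thesis by (simp add: not_in_keys_iff_lookup_eq_zero)
      qed
    qed
    then show ?thesis by auto
  qed
  also have "(\<Sum>a\<in>Poly_Mapping.keys p \<inter> {0}. Poly_Mapping.lookup p a * mon a (\<lambda>_. 1)) = const_term p"
    by (cases "0 \<in> Poly_Mapping.keys p") (auto simp: const_term_def in_keys_iff)
  finally show ?thesis .
qed

section \<open>The z-side inner product as a constant term\<close>

definition Wz :: "nat \<Rightarrow> nat \<Rightarrow> lpoly" where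
  "Wz b n = (\<Prod>i<n. \<Prod>j\<in>{..<n} - {i}. (1 - var_pow i 1 * var_pow j (-1)) ^ b)"

lemma in_vars_Wz: "in_vars n (Wz b n)"
  unfolding Wz_def
proof (rule in_vars_prod, rule in_vars_prod)
  fix i j assume "i \<in> {..<n}" "j \<in> {..<n} - {i}"
  then have "i < n" "j < n" by auto
  then show "in_vars n ((1 - var_pow i 1 * var_pow j (-1)) ^ b)"
    by (intro in_vars_power in_vars_diff in_vars_one in_vars_mult in_vars_var_pow)
qed

lemma finite_tidx: "finite (tidx N n)"
proof (rule finite_subset[OF _ finite_set_of_finite_funs[of "{..<n}" "{1..N}" 0]])
  show "tidx N n \<subseteq> {f. \<forall>x. (x \<in> {..<n} \<longrightarrow> f x \<in> {1..N}) \<and> (x \<notin> {..<n} \<longrightarrow> f x = 0)}"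
    unfolding tidx_def by (auto simp: not_less)
qed auto

lemma ip_z_formula:
  assumes "f \<in> tspace N n" "g \<in> tspace N n"
  shows "ip_z b N n f g = inverse (fact n) * const_term (Wz b n * (\<Sum>c\<in>tidx N n. lstar (f c) * g c))"
proof -
  let ?Q = "Wz b n * (\<Sum>c\<in>tidx N n. lstar (f c) * g c)"
  have "torus_int n (\<lambda>w.
      (\<Prod>i<n. \<Prod>j\<in>{..<n} - {i}. (1 - w i * inverse (w j)) ^ b) *
      (\<Sum>c\<in>tidx N n. leval_bar_inv (f c) w * leval (g c) w)) = torus_int n (\<lambda>w. leval ?Q w)"
  proof (rule torus_cong)
    fix w :: "nat \<Rightarrow> complex" assume w: "\<forall>i. w i \<noteq> 0"
    show "(\<Prod>i<n. \<Prod>j\<in>{..<n} - {i}. (1 - w i * inverse (w j)) ^ b) *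
      (\<Sum>c\<in>tidx N n. leval_bar_inv (f c) w * leval (g c) w) = leval ?Q w"
      proof -
      have "leval (Wz b n) w = (\<Prod>i<n. \<Prod>j\<in>{..<n} - {i}. (1 - w i * inverse (w j)) ^ b)"
        unfolding Wz_def leval_prod[OF w] leval_power[OF w] leval_diff leval_mult[OF w] leval_one leval_var_pow
        by (simp add: power_int_minus)
      moreover have "leval (\<Sum>c\<in>tidx N n. lstar (f c) * g c) w = (\<Sum>c\<in>tidx N n. leval_bar_inv (f c) w * leval (g c) w)"
        unfolding leval_sum leval_mult[OF w] leval_lstar ..
      ultimately show ?thesis by (simp only: leval_mult[OF w])
    qed
  qed
  also have "\<dots> = const_term ?Q"
  proof (rule torus_const)
    have fc: "in_vars n (f c)" and gc: "in_vars n (g c)" for c using assms by (auto simp: tspace_def)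
    show "in_vars n ?Q"
      by (rule in_vars_mult[OF in_vars_Wz in_vars_sum], rule in_vars_mult[OF in_vars_lstar[OF fc] gc])
  qed
  finally show ?thesis unfolding ip_z_def by (rule arg_cong[where f="\<lambda>x. inverse (fact n) * x"])
qed

lemma ul_range:
  assumes "N \<ge> 1" shows "1 \<le> ul N k" "ul N k \<le> int N"
proof -
  have "0 \<le> (k - 1) mod int N" "(k - 1) mod int N < int N" using assms by simp_all
  then show "1 \<le> ul N k" "ul N k \<le> int N" by (simp_all add: ul_def)
qed

lemma ul_ol:
  assumes "N \<ge> 1" shows "k = ul N k - int N * ol N k"
proof -
  define q where "q = (k - 1) div int N"
  have dm: "q * int N + (k - 1) mod int N = k - 1" unfolding q_def by (rule div_mult_mod_eq)
  have "ul N k - k = int N * (- q)" unfolding ul_def using dm by (simp add: algebra_simps)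
  moreover have "int N \<noteq> 0" using assms by simp
  ultimately have "ol N k = - q"
    unfolding ol_def by (metis nonzero_mult_div_cancel_left)
  then show ?thesis using \<open>ul N k - k = _\<close> by (simp add: algebra_simps)
qed

lemma ul_of:
  assumes "N \<ge> 1" "c \<in> {1..N}"
  shows "ul N (int c - int N * m) = int c"
proof -
  have "int c - int N * m - 1 = (int c - 1) + int N * (- m)" by (simp add: algebra_simps)
  then have "(int c - int N * m - 1) mod int N = (int c - 1) mod int N"
    by (simp only: mod_mult_self2)
  also have "\<dots> = int c - 1" using assms by (intro mod_pos_pos_trivial) auto
  finally show ?thesis by (simp add: ul_def)
qed

lemma ol_of:
  assumes "N \<ge> 1" "c \<in> {1..N}"
  shows "ol N (int c - int N * m) = m"
  using assms by (simp add: ol_def ul_of)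

definition vecs :: "nat \<Rightarrow> (nat \<Rightarrow> int) set" where
  "vecs n = {k. \<forall>i\<ge>n. k i = 0}"

definition Cv :: "nat \<Rightarrow> nat \<Rightarrow> (nat \<Rightarrow> int) \<Rightarrow> (nat \<Rightarrow> nat)" where
  "Cv N n k = (\<lambda>i. if i < n then nat (ul N (k i)) else 0)"

definition Ev :: "nat \<Rightarrow> nat \<Rightarrow> (nat \<Rightarrow> int) \<Rightarrow> (nat \<Rightarrow>\<^sub>0 int)" where
  "Ev N n k = (\<Sum>i<n. Poly_Mapping.single i (ol N (k i)))"

definition Kv :: "nat \<Rightarrow> nat \<Rightarrow> (nat \<Rightarrow> nat) \<Rightarrow> (nat \<Rightarrow>\<^sub>0 int) \<Rightarrow> (nat \<Rightarrow> int)" where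
  "Kv N n c a = (\<lambda>i. if i < n then int (c i) - int N * Poly_Mapping.lookup a i else 0)"

lemma lookup_Ev: "Poly_Mapping.lookup (Ev N n k) i = (if i < n then ol N (k i) else 0)"
  unfolding Ev_def lookup_sum lookup_single when_def
  by (cases "i < n") (auto simp: sum.delta)

lemma keys_Ev: "Poly_Mapping.keys (Ev N n k) \<subseteq> {..<n}"
  by (auto simp: in_keys_iff lookup_Ev split: if_splits)

lemma Cv_tidx: "N \<ge> 1 \<Longrightarrow> Cv N n k \<in> tidx N n"
proof -
  assume N: "N \<ge> 1"
  have "nat (ul N (k i)) \<in> {1..N}" for i using ul_range[OF N, of "k i"] by auto
  then show ?thesis unfolding tidx_def Cv_def by simp
qed

lemma Kv_vecs: "Kv N n c a \<in> vecs n"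
  by (simp add: Kv_def vecs_def)

lemma Cv_Kv: "N \<ge> 1 \<Longrightarrow> c \<in> tidx N n \<Longrightarrow> Cv N n (Kv N n c a) = c"
proof
  fix i assume N: "N \<ge> 1" and c: "c \<in> tidx N n"
  show "Cv N n (Kv N n c a) i = c i"
  proof (cases "i < n")
    case True
    then have "c i \<in> {1..N}" using c by (simp add: tidx_def)
    then show ?thesis using True by (simp add: Cv_def Kv_def ul_of[OF N])
  next
    case False then show ?thesis using c by (simp add: Cv_def tidx_def)
  qed
qed

lemma Ev_Kv: "N \<ge> 1 \<Longrightarrow> c \<in> tidx N n \<Longrightarrow> Poly_Mapping.keys a \<subseteq> {..<n} \<Longrightarrow> Ev N n (Kv N n c a) = a"
proof (rule poly_mapping_eqI)
  fix i assume N: "N \<ge> 1" and c: "c \<in> tidx N n" and a: "Poly_Mapping.keys a \<subseteq> {..<n}"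
  show "Poly_Mapping.lookup (Ev N n (Kv N n c a)) i = Poly_Mapping.lookup a i"
  proof (cases "i < n")
    case True
    then have "c i \<in> {1..N}" using c by (simp add: tidx_def)
    then show ?thesis using True by (simp add: lookup_Ev Kv_def ol_of[OF N])
  next
    case False
    then have "i \<notin> Poly_Mapping.keys a" using a by auto
    then show ?thesis using False by (simp add: lookup_Ev not_in_keys_iff_lookup_eq_zero)
  qed
qed

lemma Kv_Cv_Ev: "N \<ge> 1 \<Longrightarrow> k \<in> vecs n \<Longrightarrow> Kv N n (Cv N n k) (Ev N n k) = k"
proof
  fix i assume N: "N \<ge> 1" and k: "k \<in> vecs n"
  show "Kv N n (Cv N n k) (Ev N n k) i = k i"
  proof (cases "i < n")
    case True
    have "int (nat (ul N (k i))) = ul N (k i)" using ul_range[OF N, of "k i"] by simp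
    then show ?thesis using True ul_ol[OF N, of "k i"] by (simp add: Kv_def Cv_def lookup_Ev)
  next
    case False then show ?thesis using k by (simp add: Kv_def vecs_def)
  qed
qed

lemma CE_inj:
  assumes "N \<ge> 1" "k \<in> vecs n" "k' \<in> vecs n" "Cv N n k = Cv N n k'" "Ev N n k = Ev N n k'"
  shows "k = k'"
proof -
  have "k = Kv N n (Cv N n k) (Ev N n k)" using Kv_Cv_Ev[OF assms(1,2)] by simp
  also have "\<dots> = Kv N n (Cv N n k') (Ev N n k')" using assms(4,5) by simp
  also have "\<dots> = k'" using Kv_Cv_Ev[OF assms(1,3)] by simp
  finally show ?thesis .
qed

lemma decseqs_vecs: "decseqs n \<subseteq> vecs n"
  by (auto simp: decseqs_def vecs_def)

lemma vecs_comp: "k \<in> vecs n \<Longrightarrow> w permutes {..<n} \<Longrightarrow> k \<circ> w \<in> vecs n"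
  by (auto simp: vecs_def permutes_not_in)

lemma decseqs_inj: "k \<in> decseqs n \<Longrightarrow> inj_on k {..<n}"
proof (rule inj_onI)
  fix x y assume k: "k \<in> decseqs n" and xy: "x \<in> {..<n}" "y \<in> {..<n}" "k x = k y"
  show "x = y"
  proof (rule ccontr)
    assume "x \<noteq> y"
    then consider "x < y" | "y < x" by linarith
    then show False using k xy unfolding decseqs_def by cases force+
  qed
qed

lemma strict_mono_perm_ge:
  fixes \<pi> :: "nat \<Rightarrow> nat" and n :: nat
  assumes mono: "\<And>p q. p < q \<Longrightarrow> q < n \<Longrightarrow> \<pi> p < (\<pi> q :: nat)"
  shows "p < n \<Longrightarrow> p \<le> \<pi> p"
proof (induction p)
  case 0 then show ?case by simp
next
  case (Suc p)
  then have "\<pi> p < \<pi> (Suc p)" using mono by simp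
  moreover have "p \<le> \<pi> p" using Suc by simp
  ultimately show ?case by simp
qed

lemma strict_mono_perm_id:
  fixes \<pi> :: "nat \<Rightarrow> nat" and n :: nat
  assumes perm: "\<pi> permutes {..<n}"
    and mono: "\<And>p q. p < q \<Longrightarrow> q < n \<Longrightarrow> \<pi> p < \<pi> q"
  shows "p < n \<Longrightarrow> \<pi> p = p"
proof (rule ccontr)
  assume p: "p < n" and ne: "\<pi> p \<noteq> p"
  have ge: "\<forall>x\<in>{..<n}. x \<le> \<pi> x" using strict_mono_perm_ge[OF mono] by auto
  have "p < \<pi> p" using ge p ne by force
  then have "(\<Sum>x<n. x) < (\<Sum>x<n. \<pi> x)"
    using ge p by (intro sum_strict_mono_ex1) auto
  also have "(\<Sum>x<n. \<pi> x) = (\<Sum>x<n. x)"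
    using sum.reindex_bij_betw[OF permutes_imp_bij[OF perm], of "\<lambda>x. x"] by simp
  finally show False by simp
qed

lemma sort_unique:
  assumes k: "k \<in> decseqs n" and k': "k' \<in> decseqs n"
    and w: "w permutes {..<n}" and w': "w' permutes {..<n}"
    and eq: "k \<circ> w = k' \<circ> w'"
  shows "k = k' \<and> w = w'"
proof -
  define \<pi> where "\<pi> = w' \<circ> inv w"
  have perm: "\<pi> permutes {..<n}" unfolding \<pi>_def by (intro permutes_compose permutes_inv w w')
  have kp: "k p = k' (\<pi> p)" for p
  proof -
    have "k p = k (w (inv w p))" by (simp add: permutes_inverses(1)[OF w])
    also have "\<dots> = k' (w' (inv w p))" using eq by (metis comp_apply)
    finally show ?thesis by (simp add: \<pi>_def)
  qed
  have pin: "p < n \<Longrightarrow> \<pi> p < n" for p using permutes_in_image[OF perm, of p] by simp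
  have mono: "\<pi> p < \<pi> q" if pq: "p < q" "q < n" for p q
  proof (rule ccontr)
    assume "\<not> \<pi> p < \<pi> q"
    then have disj: "\<pi> q < \<pi> p \<or> \<pi> q = \<pi> p" by linarith
    have "k q < k p" using k pq unfolding decseqs_def by blast
    from disj show False
    proof
      assume "\<pi> q < \<pi> p"
      then have "k' (\<pi> p) < k' (\<pi> q)" using k' pin pq unfolding decseqs_def by auto
      then show False using \<open>k q < k p\<close> kp by (metis not_less_iff_gr_or_eq)
    next
      assume "\<pi> q = \<pi> p"
      then show False using \<open>k q < k p\<close> kp by (metis order_less_irrefl)
    qed
  qed
  have pid: "p < n \<Longrightarrow> \<pi> p = p" for p by (rule strict_mono_perm_id[OF perm mono])
  have kk: "k = k'"
  proof
    fix p show "k p = k' p"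
    proof (cases "p < n")
      case True then show ?thesis using kp pid by simp
    next
      case False then show ?thesis using k k' by (simp add: decseqs_def)
    qed
  qed
  have ww: "w = w'"
  proof
    fix i show "w i = w' i"
    proof (cases "i < n")
      case True
      have "w i \<in> {..<n}" "w' i \<in> {..<n}" using True permutes_in_image[OF w] permutes_in_image[OF w'] by auto
      moreover have "k (w i) = k (w' i)" using eq kk by (metis comp_apply)
      ultimately show ?thesis using decseqs_inj[OF k] by (meson inj_onD)
    next
      case False then show ?thesis using permutes_not_in[OF w] permutes_not_in[OF w'] by simp
    qed
  qed
  show ?thesis using kk ww by simp
qed

lemma sort_exists:
  assumes k0: "k0 \<in> vecs n" and inj: "inj_on k0 {..<n}"
  shows "\<exists>k w. k \<in> decseqs n \<and> w permutes {..<n} \<and> k \<circ> w = k0"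
proof -
  define r where "r i = (if i < n then card {j\<in>{..<n}. k0 i < k0 j} else i)" for i
  have rless: "r i < n" if "i < n" for i
  proof -
    have "{j\<in>{..<n}. k0 i < k0 j} \<subseteq> {..<n} - {i}" by auto
    then have "card {j\<in>{..<n}. k0 i < k0 j} \<le> card ({..<n} - {i})" by (intro card_mono) auto
    also have "\<dots> = n - 1" using that by simp
    finally show ?thesis using that by (simp add: r_def)
  qed
  have rmono: "r j < r i" if "i < n" "j < n" "k0 i < k0 j" for i j
  proof -
    have "{l\<in>{..<n}. k0 j < k0 l} \<subset> {l\<in>{..<n}. k0 i < k0 l}"
      using that by auto
    then have "card {l\<in>{..<n}. k0 j < k0 l} < card {l\<in>{..<n}. k0 i < k0 l}"
      by (intro psubset_card_mono) auto
    then show ?thesis using that by (simp add: r_def)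
  qed
  have rinj: "inj_on r {..<n}"
  proof (rule inj_onI)
    fix i j assume ij: "i \<in> {..<n}" "j \<in> {..<n}" "r i = r j"
    show "i = j"
    proof (rule ccontr)
      assume "i \<noteq> j"
      then have "k0 i \<noteq> k0 j" using inj ij by (meson inj_onD)
      then have "k0 i < k0 j \<or> k0 j < k0 i" by linarith
      then show False using rmono ij by (metis lessThan_iff order_less_irrefl)
    qed
  qed
  have "r ` {..<n} = {..<n}"
    by (rule endo_inj_surj) (use rless rinj in auto)
  then have "bij_betw r {..<n} {..<n}" using rinj by (simp add: bij_betw_def)
  then have rperm: "r permutes {..<n}" by (rule bij_imp_permutes) (simp add: r_def)
  define k where "k p = (if p < n then k0 (inv r p) else 0)" for p
  have "k \<circ> r = k0"
  proof
    fix i show "(k \<circ> r) i = k0 i"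
    proof (cases "i < n")
      case True then show ?thesis using rless by (simp add: k_def permutes_inverses(2)[OF rperm])
    next
      case False then show ?thesis using k0 by (simp add: k_def r_def vecs_def)
    qed
  qed
  moreover have "k \<in> decseqs n"
    unfolding decseqs_def
  proof (intro CollectI conjI allI impI)
    fix p q assume pq: "p < q" "q < n"
    define i where "i = inv r p"
    define j where "j = inv r q"
    have ij: "i < n" "j < n" "r i = p" "r j = q"
      using pq permutes_in_image[OF permutes_inv[OF rperm]] permutes_inverses(1)[OF rperm]
      by (auto simp: i_def j_def)
    have "i \<noteq> j" using ij pq by auto
    then have "k0 i \<noteq> k0 j" using inj ij by (meson inj_onD lessThan_iff)
    moreover have "\<not> k0 i < k0 j" using rmono[of i j] ij pq by auto
    ultimately have "k0 j < k0 i" by linarith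
    then show "k q < k p" using pq by (simp add: k_def i_def j_def)
  next
    fix i :: nat assume "n \<le> i" then show "k i = 0" by (simp add: k_def)
  qed
  ultimately show ?thesis using rperm by blast
qed

section \<open>Antisymmetric coefficients\<close>

definition gco :: "nat \<Rightarrow> nat \<Rightarrow> ((nat \<Rightarrow> nat) \<Rightarrow> lpoly) \<Rightarrow> (nat \<Rightarrow> int) \<Rightarrow> complex" where
  "gco N n f k = Poly_Mapping.lookup (f (Cv N n k)) (Ev N n k)"

lemma uhat_Cv: "uhat N n k c = (\<Sum>w | w permutes {..<n}.
   if c = Cv N n (k \<circ> w) then Poly_Mapping.single (Ev N n (k \<circ> w)) (of_int (sign w)) else 0)"
  unfolding uhat_def Cv_def Ev_def comp_def ..

lemma lookup_uhat: "Poly_Mapping.lookup (uhat N n k c) a = (\<Sum>w | w permutes {..<n}.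
   if c = Cv N n (k \<circ> w) \<and> a = Ev N n (k \<circ> w) then of_int (sign w) else 0)"
  unfolding uhat_Cv lookup_sum by (intro sum.cong) (auto simp: lookup_single when_def)

lemma transpose_lt: "i < n \<Longrightarrow> j < n \<Longrightarrow> (Transposition.transpose i j l < n) = (l < n)"
  by (cases "l = i"; cases "l = j") auto

lemma Cv_swap: "i < n \<Longrightarrow> j < n \<Longrightarrow> Cv N n (k \<circ> Transposition.transpose i j) = Cv N n k \<circ> Transposition.transpose i j"
  by (auto simp: Cv_def fun_eq_iff transpose_lt)

lemma Ev_swap: "i < n \<Longrightarrow> j < n \<Longrightarrow> Ev N n (k \<circ> Transposition.transpose i j) = swap_exp i j (Ev N n k)"
  by (rule poly_mapping_eqI) (auto simp: lookup_Ev lookup_swap_exp transpose_lt)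

lemma Fspace_swap:
  assumes "f \<in> Fspace N n" "i < n" "j < n" "i \<noteq> j"
  shows "Kswap i j (f c) = - f (c \<circ> Transposition.transpose i j)"
proof -
  have "Kt i j f = - Pt i j f" using assms by (auto simp: Fspace_def)
  then have "Kt i j f c = (- Pt i j f) c" by simp
  then show ?thesis by (simp add: Kt_def Pt_def)
qed

lemma gco_swap:
  assumes f: "f \<in> Fspace N n" and ij: "i < n" "j < n" "i \<noteq> j"
  shows "gco N n f (k \<circ> Transposition.transpose i j) = - gco N n f k"
proof -
  have "gco N n f k = Poly_Mapping.lookup (Kswap i j (f (Cv N n k))) (swap_exp i j (Ev N n k))"
    by (simp add: gco_def lookup_Kswap)
  also have "\<dots> = - Poly_Mapping.lookup (f (Cv N n k \<circ> Transposition.transpose i j)) (swap_exp i j (Ev N n k))"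
    by (simp add: Fspace_swap[OF f ij])
  also have "\<dots> = - gco N n f (k \<circ> Transposition.transpose i j)"
    by (simp add: gco_def Cv_swap[OF ij(1,2)] Ev_swap[OF ij(1,2)])
  finally show ?thesis by simp
qed

lemma gco_perm:
  assumes f: "f \<in> Fspace N n" and w: "w permutes {..<n}"
  shows "gco N n f (k \<circ> w) = of_int (sign w) * gco N n f k"
proof -
  have "\<forall>k. gco N n f (k \<circ> w) = of_int (sign w) * gco N n f k"
    using w finite_lessThan[of n]
  proof (induction rule: permutes_induct)
    case id then show ?case by simp
  next
    case (swap a b p)
    show ?case
    proof
      fix k
      have pp: "permutation p" using swap.hyps(4) by (rule permutes_imp_permutation[rotated]) simp
      have "gco N n f (k \<circ> (Transposition.transpose a b \<circ> p)) = gco N n f ((k \<circ> Transposition.transpose a b) \<circ> p)"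
        by (simp add: o_assoc)
      also have "\<dots> = of_int (sign p) * gco N n f (k \<circ> Transposition.transpose a b)"
        using swap.IH by blast
      also have "\<dots> = - of_int (sign p) * gco N n f k"
        using gco_swap[OF f, of a b k] swap.hyps by simp
      also have "sign (Transposition.transpose a b \<circ> p) = - sign p"
        using swap.hyps pp by (simp add: sign_compose permutation_swap_id sign_swap_id)
      ultimately show "gco N n f (k \<circ> (Transposition.transpose a b \<circ> p)) =
          of_int (sign (Transposition.transpose a b \<circ> p)) * gco N n f k" by simp
    qed
  qed
  then show ?thesis by blast
qed

lemma gco_rep:
  assumes f: "f \<in> Fspace N n" and ij: "i < n" "j < n" "i \<noteq> j" and eq: "k i = k j"
  shows "gco N n f k = 0"
proof -
  have "k \<circ> Transposition.transpose i j = k"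
  proof
    fix x show "(k \<circ> Transposition.transpose i j) x = k x"
      using eq by (cases "x = i"; cases "x = j") auto
  qed
  then have "gco N n f k = - gco N n f k" using gco_swap[OF f ij, of k] by simp
  then show ?thesis by simp
qed

lemma gco_noninj:
  assumes f: "f \<in> Fspace N n" and "gco N n f k \<noteq> 0"
  shows "inj_on k {..<n}"
proof (rule inj_onI, rule ccontr)
  fix i j assume "i \<in> {..<n}" "j \<in> {..<n}" "k i = k j" "i \<noteq> j"
  then show False using gco_rep[OF f, of i j k] assms(2) by auto
qed

definition Kset :: "nat \<Rightarrow> nat \<Rightarrow> ((nat \<Rightarrow> nat) \<Rightarrow> lpoly) \<Rightarrow> (nat \<Rightarrow> int) set" where
  "Kset N n f = {k \<in> decseqs n. gco N n f k \<noteq> 0}"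

lemma Fspace_tspace: "f \<in> Fspace N n \<Longrightarrow> f \<in> tspace N n"
  by (simp add: Fspace_def)

lemma finite_Kset:
  assumes N: "N \<ge> 1" and f: "f \<in> tspace N n"
  shows "finite (Kset N n f)"
proof -
  let ?h = "\<lambda>k. (Cv N n k, Ev N n k)"
  have "inj_on ?h (Kset N n f)"
  proof (rule inj_onI)
    fix x y assume "x \<in> Kset N n f" "y \<in> Kset N n f" "?h x = ?h y"
    moreover then have "x \<in> vecs n" "y \<in> vecs n" using decseqs_vecs by (auto simp: Kset_def)
    ultimately show "x = y" using CE_inj[OF N] by auto
  qed
  moreover have "?h ` Kset N n f \<subseteq> Sigma (tidx N n) (\<lambda>c. Poly_Mapping.keys (f c))"
    using Cv_tidx[OF N] by (auto simp: Kset_def gco_def in_keys_iff)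
  moreover have "finite (Sigma (tidx N n) (\<lambda>c. Poly_Mapping.keys (f c)))"
    using finite_tidx by (intro finite_SigmaI) auto
  ultimately show ?thesis by (meson finite_imageD finite_subset)
qed

lemma perm_sum_single:
  assumes ks: "ks \<in> decseqs n" and ws: "ws permutes {..<n}" and k: "k \<in> decseqs n"
  shows "(\<Sum>w | w permutes {..<n}. if k \<circ> w = ks \<circ> ws then X w else 0) = (if k = ks then X ws else 0)"
proof (cases "k = ks")
  case True
  have "(\<Sum>w | w permutes {..<n}. if k \<circ> w = ks \<circ> ws then X w else 0) =
        (\<Sum>w | w permutes {..<n}. if w = ws then X w else 0)"
    using sort_unique[OF k ks _ ws] True by (intro sum.cong) auto
  also have "\<dots> = X ws" using ws by (simp add: sum.delta' finite_permutations)
  finally show ?thesis using True by simp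
next
  case False
  have "(\<Sum>w | w permutes {..<n}. if k \<circ> w = ks \<circ> ws then X w else 0) = 0"
    using False sort_unique[OF k ks _ ws] by (intro sum.neutral) auto
  then show ?thesis using False by simp
qed

lemma span_lookup:
  assumes N: "N \<ge> 1" and f: "f \<in> Fspace N n"
  shows "Poly_Mapping.lookup (\<Sum>k\<in>Kset N n f. lscale (gco N n f k) (uhat N n k c)) a = Poly_Mapping.lookup (f c) a"
proof -
  have ft: "f \<in> tspace N n" using f by (rule Fspace_tspace)
  have "Poly_Mapping.lookup (\<Sum>k\<in>Kset N n f. lscale (gco N n f k) (uhat N n k c)) a =
    (\<Sum>k\<in>Kset N n f. \<Sum>w | w permutes {..<n}.
       if c = Cv N n (k \<circ> w) \<and> a = Ev N n (k \<circ> w) then gco N n f (k \<circ> w) else 0)"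
    unfolding lookup_sum lookup_lscale lookup_uhat sum_distrib_left
    by (intro sum.cong refl) (auto simp: gco_perm[OF f])
  also have "\<dots> = Poly_Mapping.lookup (f c) a"
  proof (cases "c \<in> tidx N n \<and> Poly_Mapping.keys a \<subseteq> {..<n}")
    case True
    define k0 where "k0 = Kv N n c a"
    have k0v: "k0 \<in> vecs n" by (simp add: k0_def Kv_vecs)
    have Ck0: "Cv N n k0 = c" and Ek0: "Ev N n k0 = a"
      using True Cv_Kv[OF N] Ev_Kv[OF N] by (auto simp: k0_def)
    have fca: "Poly_Mapping.lookup (f c) a = gco N n f k0" by (simp add: gco_def Ck0 Ek0)
    have cond: "(c = Cv N n (k \<circ> w) \<and> a = Ev N n (k \<circ> w)) = (k \<circ> w = k0)"
      if "k \<in> decseqs n" "w permutes {..<n}" for k w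
    proof
      assume "c = Cv N n (k \<circ> w) \<and> a = Ev N n (k \<circ> w)"
      then show "k \<circ> w = k0"
        using CE_inj[OF N vecs_comp[OF set_mp[OF decseqs_vecs that(1)] that(2)] k0v] Ck0 Ek0 by auto
    qed (use Ck0 Ek0 in auto)
    have "(\<Sum>k\<in>Kset N n f. \<Sum>w | w permutes {..<n}.
       if c = Cv N n (k \<circ> w) \<and> a = Ev N n (k \<circ> w) then gco N n f (k \<circ> w) else 0) =
       (\<Sum>k\<in>Kset N n f. \<Sum>w | w permutes {..<n}. if k \<circ> w = k0 then gco N n f k0 else 0)"
      using cond by (intro sum.cong refl) (auto simp: Kset_def)
    also have "\<dots> = gco N n f k0"
    proof (cases "gco N n f k0 = 0")
      case True then show ?thesis unfolding True by simp
    next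
      case False
      then have "inj_on k0 {..<n}" by (rule gco_noninj[OF f])
      then obtain ks ws where ks: "ks \<in> decseqs n" and ws: "ws permutes {..<n}" and kw: "ks \<circ> ws = k0"
        using sort_exists[OF k0v] by blast
      have "gco N n f k0 = of_int (sign ws) * gco N n f ks" using gco_perm[OF f ws, of ks] kw by simp
      then have "gco N n f ks \<noteq> 0" using False by auto
      then have ksK: "ks \<in> Kset N n f" using ks by (simp add: Kset_def)
      have "(\<Sum>k\<in>Kset N n f. \<Sum>w | w permutes {..<n}. if k \<circ> w = k0 then gco N n f k0 else 0) =
            (\<Sum>k\<in>Kset N n f. if k = ks then gco N n f k0 else 0)"
      proof (intro sum.cong refl)
        fix k assume "k \<in> Kset N n f"
        then have "k \<in> decseqs n" by (simp add: Kset_def)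
        from perm_sum_single[OF ks ws this, of "\<lambda>_. gco N n f k0"]
        show "(\<Sum>w | w permutes {..<n}. if k \<circ> w = k0 then gco N n f k0 else 0) = (if k = ks then gco N n f k0 else 0)"
          unfolding kw .
      qed
      also have "\<dots> = gco N n f k0" using ksK finite_Kset[OF N ft] by (simp add: sum.delta')
      finally show ?thesis .
    qed
    finally show ?thesis using fca by simp
  next
    case False
    then consider "c \<notin> tidx N n" | "c \<in> tidx N n" "\<not> Poly_Mapping.keys a \<subseteq> {..<n}" by blast
    then show ?thesis
    proof cases
      case 1
      then have "f c = 0" using ft by (simp add: tspace_def)
      moreover have "c \<noteq> Cv N n k" for k using 1 Cv_tidx[OF N, of n k] by auto
      ultimately show ?thesis by simp
    next
      case 2
      have "in_vars n (f c)" using ft by (simp add: tspace_def)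
      then have "a \<notin> Poly_Mapping.keys (f c)" using 2 by (auto simp: in_vars_def)
      moreover have "a \<noteq> Ev N n k" for k using 2 keys_Ev[of N n k] by auto
      ultimately show ?thesis by (simp add: in_keys_iff)
    qed
  qed
  finally show ?thesis .
qed

lemma span:
  assumes N: "N \<ge> 1" and f: "f \<in> Fspace N n"
  shows "f = (\<lambda>c. \<Sum>k\<in>Kset N n f. lscale (gco N n f k) (uhat N n k c))"
  by (rule ext, rule poly_mapping_eqI) (simp add: span_lookup[OF N f])

lemma uhat_coeff:
  assumes N: "N \<ge> 1" and k: "k \<in> decseqs n" and k0: "k0 \<in> decseqs n"
  shows "Poly_Mapping.lookup (uhat N n k (Cv N n k0)) (Ev N n k0) = (if k = k0 then 1 else 0)"
proof -
  have idp: "id permutes {..<n}" by (rule permutes_id)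
  have "Poly_Mapping.lookup (uhat N n k (Cv N n k0)) (Ev N n k0) =
     (\<Sum>w | w permutes {..<n}. if k \<circ> w = k0 \<circ> id then (\<lambda>w. complex_of_int (sign w)) w else 0)"
    unfolding lookup_uhat
  proof (intro sum.cong refl)
    fix w assume "w \<in> {w. w permutes {..<n}}"
    then have w: "w permutes {..<n}" by simp
    have "(Cv N n k0 = Cv N n (k \<circ> w) \<and> Ev N n k0 = Ev N n (k \<circ> w)) = (k \<circ> w = k0 \<circ> id)"
      using CE_inj[OF N set_mp[OF decseqs_vecs k0] vecs_comp[OF set_mp[OF decseqs_vecs k] w]] by auto
    then show "(if Cv N n k0 = Cv N n (k \<circ> w) \<and> Ev N n k0 = Ev N n (k \<circ> w) then complex_of_int (sign w) else 0) =
       (if k \<circ> w = k0 \<circ> id then (\<lambda>w. complex_of_int (sign w)) w else 0)" by simp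
  qed
  also have "\<dots> = (if k = k0 then 1 else 0)"
    using perm_sum_single[OF k0 idp k, of "\<lambda>w. complex_of_int (sign w)"] by simp
  finally show ?thesis .
qed

lemma Omega_eq:
  assumes N: "N \<ge> 1" and f: "f \<in> Fspace N n"
  shows "Omega N n f = (\<Sum>k\<in>Kset N n f. lscale (gco N n f k) (schur n (\<lambda>i. k i - ovec n i)))"
proof -
  define coef0 where "coef0 k = (if k \<in> decseqs n then gco N n f k else 0)" for k
  have S0: "{k. coef0 k \<noteq> 0} = Kset N n f" by (auto simp: coef0_def Kset_def)
  have ft: "f \<in> tspace N n" using f by (rule Fspace_tspace)
  let ?R = "\<Sum>k\<in>Kset N n f. lscale (gco N n f k) (schur n (\<lambda>i. k i - ovec n i))"
  have ex: "\<exists>coef :: (nat \<Rightarrow> int) \<Rightarrow> complex.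
      finite {k. coef k \<noteq> 0} \<and> {k. coef k \<noteq> 0} \<subseteq> decseqs n \<and>
      f = (\<lambda>c. \<Sum>k | coef k \<noteq> 0. lscale (coef k) (uhat N n k c)) \<and>
      ?R = (\<Sum>k | coef k \<noteq> 0. lscale (coef k) (schur n (\<lambda>i. k i - ovec n i)))"
  proof (intro exI[of _ coef0] conjI)
    show "finite {k. coef0 k \<noteq> 0}" unfolding S0 by (rule finite_Kset[OF N ft])
    show "{k. coef0 k \<noteq> 0} \<subseteq> decseqs n" unfolding S0 by (auto simp: Kset_def)
    show "f = (\<lambda>c. \<Sum>k | coef0 k \<noteq> 0. lscale (coef0 k) (uhat N n k c))"
      unfolding S0 by (subst span[OF N f]) (auto intro!: sum.cong simp: coef0_def Kset_def)
    show "?R = (\<Sum>k | coef0 k \<noteq> 0. lscale (coef0 k) (schur n (\<lambda>i. k i - ovec n i)))"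
      unfolding S0 by (auto intro!: sum.cong simp: coef0_def Kset_def)
  qed
  have uniq: "P = ?R" if "\<exists>coef :: (nat \<Rightarrow> int) \<Rightarrow> complex.
      finite {k. coef k \<noteq> 0} \<and> {k. coef k \<noteq> 0} \<subseteq> decseqs n \<and>
      f = (\<lambda>c. \<Sum>k | coef k \<noteq> 0. lscale (coef k) (uhat N n k c)) \<and>
      P = (\<Sum>k | coef k \<noteq> 0. lscale (coef k) (schur n (\<lambda>i. k i - ovec n i)))" for P
  proof -
    from that obtain coef :: "(nat \<Rightarrow> int) \<Rightarrow> complex" where
      fin: "finite {k. coef k \<noteq> 0}" and sub: "{k. coef k \<noteq> 0} \<subseteq> decseqs n" and
      fe: "f = (\<lambda>c. \<Sum>k | coef k \<noteq> 0. lscale (coef k) (uhat N n k c))" and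
      Pe: "P = (\<Sum>k | coef k \<noteq> 0. lscale (coef k) (schur n (\<lambda>i. k i - ovec n i)))"
      by blast
    have "coef k0 = coef0 k0" for k0
    proof (cases "k0 \<in> decseqs n")
      case True
      have "gco N n f k0 = (\<Sum>k | coef k \<noteq> 0. coef k * Poly_Mapping.lookup (uhat N n k (Cv N n k0)) (Ev N n k0))"
        unfolding gco_def by (subst fe) (simp add: lookup_sum lookup_lscale)
      also have "\<dots> = (\<Sum>k | coef k \<noteq> 0. if k = k0 then coef k else 0)"
        using sub True by (intro sum.cong refl) (auto simp: uhat_coeff[OF N])
      also have "\<dots> = coef k0" using fin by (auto simp: sum.delta')
      finally show ?thesis using True by (simp add: coef0_def)
    next
      case False then show ?thesis using sub by (auto simp: coef0_def)
    qed
    then have "coef = coef0" by auto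
    then show ?thesis using Pe S0 by (auto intro!: sum.cong simp: coef0_def Kset_def)
  qed
  show ?thesis unfolding Omega_def
  proof (rule the_equality)
    show "\<exists>coef :: (nat \<Rightarrow> int) \<Rightarrow> complex.
      finite {k. coef k \<noteq> 0} \<and> {k. coef k \<noteq> 0} \<subseteq> decseqs n \<and>
      f = (\<lambda>c. \<Sum>k | coef k \<noteq> 0. lscale (coef k) (uhat N n k c)) \<and>
      ?R = (\<Sum>k | coef k \<noteq> 0. lscale (coef k) (schur n (\<lambda>i. k i - ovec n i)))" by (rule ex)
  qed (rule uniq)
qed

section \<open>Substitution x_i := x_j and divisibility\<close>

definition xv :: "nat \<Rightarrow> lpoly" where "xv i = var_pow i 1"

definition mg :: "nat \<Rightarrow> nat \<Rightarrow> (nat \<Rightarrow>\<^sub>0 int) \<Rightarrow> (nat \<Rightarrow>\<^sub>0 int)" where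
  "mg i j a = a - Poly_Mapping.single i (Poly_Mapping.lookup a i) + Poly_Mapping.single j (Poly_Mapping.lookup a i)"

definition phi :: "nat \<Rightarrow> nat \<Rightarrow> lpoly \<Rightarrow> lpoly" where "phi i j = kmap (mg i j)"

lemma mg_add: "mg i j (a + b) = mg i j a + mg i j b"
  by (simp add: mg_def lookup_add single_add algebra_simps)

lemma mg_zero: "mg i j 0 = 0" by (simp add: mg_def)

lemma phi_add: "phi i j (p + q) = phi i j p + phi i j q" by (simp add: phi_def kmap_add)
lemma phi_diff: "phi i j (p - q) = phi i j p - phi i j q" by (simp add: phi_def kmap_diff)
lemma phi_uminus: "phi i j (- p) = - phi i j p" by (simp add: phi_def kmap_uminus)
lemma phi_mult: "phi i j (p * q) = phi i j p * phi i j q" by (simp add: phi_def kmap_mult mg_add)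
lemma phi_one: "phi i j 1 = 1" by (simp add: phi_def kmap_one mg_zero)
lemma phi_prod: "phi i j (prod f S) = (\<Prod>x\<in>S. phi i j (f x))"
  by (rule hom_prod_gen) (auto simp: phi_mult phi_one)

lemma phi_var_pow: "phi i j (var_pow k e) = var_pow (if k = i then j else k) e"
  by (auto simp: phi_def var_pow_def mg_def lookup_single when_def single_uminus)

lemma phi_xv: "phi i j (xv k) = xv (if k = i then j else k)"
  by (simp add: xv_def phi_var_pow)

lemma kmap_kmap: "kmap g (kmap h p) = kmap (g \<circ> h) p"
  by (simp add: kmap_def[of h] kmap_sum kmap_def[of "g \<circ> h"])

lemma mg_swap: "i \<noteq> j \<Longrightarrow> mg i j (swap_exp i j a) = mg i j a"
  by (rule poly_mapping_eqI) (auto simp: mg_def lookup_swap_exp lookup_add lookup_minus lookup_single when_def)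

lemma phi_Kswap: "i \<noteq> j \<Longrightarrow> phi i j (Kswap i j p) = phi i j p"
  by (simp add: phi_def Kswap_kmap kmap_kmap comp_def mg_swap)

lemma var_pow_nat: "var_pow i (int m) = xv i ^ m"
  by (induction m) (simp_all add: xv_def var_pow_add)

lemma var_pow_inv: "var_pow i (- e) * var_pow i e = 1"
  by (simp add: var_pow_add[symmetric])

lemma xv_power_dvd: "(xv i - xv j) dvd (xv i ^ m - xv j ^ m)"
proof (cases m)
  case 0 then show ?thesis by simp
next
  case (Suc m') show ?thesis unfolding Suc diff_power_eq_sum by (rule dvd_triv_left)
qed

lemma var_pow_dvd: "(xv i - xv j) dvd (var_pow i e - var_pow j e)"
proof (cases "e \<ge> 0")
  case True
  then obtain m where "e = int m" by (metis nonneg_int_cases)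
  then show ?thesis by (simp add: var_pow_nat xv_power_dvd)
next
  case False
  then obtain m where e: "e = - int m" by (metis linorder_le_less_linear neg_int_cases order_less_imp_le)
  have "var_pow i e - var_pow j e = var_pow i e * var_pow j e * (var_pow j (int m) - var_pow i (int m))"
  proof -
    have "var_pow i e * var_pow j e * (var_pow j (int m) - var_pow i (int m)) =
       var_pow i e * (var_pow j e * var_pow j (int m)) - var_pow j e * (var_pow i e * var_pow i (int m))"
      by (simp add: algebra_simps)
    also have "\<dots> = var_pow i e - var_pow j e" using var_pow_inv e by simp
    finally show ?thesis by simp
  qed
  moreover have "(xv i - xv j) dvd (var_pow j (int m) - var_pow i (int m))"
  proof -
    have "(xv i - xv j) dvd (xv i ^ m - xv j ^ m)" by (rule xv_power_dvd)
    then have "(xv i - xv j) dvd - (xv i ^ m - xv j ^ m)" by (rule dvd_minus_iff[THEN iffD2])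
    then show ?thesis by (simp add: var_pow_nat)
  qed
  ultimately show ?thesis by (metis dvd_mult)
qed

lemma phi_zero_dvd:
  assumes "phi i j p = 0"
  shows "(xv i - xv j) dvd p"
proof -
  let ?t = "\<lambda>a. Poly_Mapping.single (a - Poly_Mapping.single i (Poly_Mapping.lookup a i)) (Poly_Mapping.lookup p a)
       * (var_pow i (Poly_Mapping.lookup a i) - var_pow j (Poly_Mapping.lookup a i))"
  have tm: "Poly_Mapping.single a (Poly_Mapping.lookup p a) - Poly_Mapping.single (mg i j a) (Poly_Mapping.lookup p a) = ?t a" for a
    by (simp add: right_diff_distrib var_pow_def mult_single mg_def)
  have "p = p - phi i j p" using assms by simp
  also have "\<dots> = (\<Sum>a\<in>Poly_Mapping.keys p. Poly_Mapping.single a (Poly_Mapping.lookup p a)) -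
      (\<Sum>a\<in>Poly_Mapping.keys p. Poly_Mapping.single (mg i j a) (Poly_Mapping.lookup p a))"
    by (simp add: phi_def kmap_def flip: pm_expand)
  also have "\<dots> = (\<Sum>a\<in>Poly_Mapping.keys p. ?t a)"
    by (simp add: sum_subtractf[symmetric] tm)
  finally have pe: "p = (\<Sum>a\<in>Poly_Mapping.keys p. ?t a)" .
  have "(xv i - xv j) dvd (\<Sum>a\<in>Poly_Mapping.keys p. ?t a)"
    by (intro dvd_sum dvd_mult var_pow_dvd)
  then show ?thesis using pe by simp
qed

lemma dvd_phi_zero:
  assumes "(xv i - xv j) dvd p"
  shows "phi i j p = 0"
proof -
  obtain r where "p = (xv i - xv j) * r" using assms by blast
  then show ?thesis by (simp add: phi_mult phi_diff phi_xv)
qed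

lemma lookup_xv: "Poly_Mapping.lookup (xv i) a = (if a = Poly_Mapping.single i 1 then 1 else 0)"
  by (simp add: xv_def var_pow_def lookup_single when_def eq_commute)

lemma xv_diff_ne: "a \<noteq> b \<Longrightarrow> xv a - xv b \<noteq> 0"
proof
  assume ab: "a \<noteq> b" and "xv a - xv b = 0"
  then have "Poly_Mapping.lookup (xv a - xv b) (Poly_Mapping.single a 1) = 0" by simp
  moreover have "Poly_Mapping.single a (1::int) \<noteq> Poly_Mapping.single b 1"
    using ab by (metis lookup_single_eq lookup_single_not_eq zero_neq_one)
  ultimately show False by (simp add: lookup_minus lookup_xv)
qed

definition Pairs :: "nat \<Rightarrow> (nat \<times> nat) set" where "Pairs n = {(i, j). i < j \<and> j < n}"

definition Vn :: "nat \<Rightarrow> lpoly" where "Vn n = (\<Prod>(i, j)\<in>Pairs n. xv i - xv j)"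

lemma finite_Pairs: "finite (Pairs n)"
  by (rule finite_subset[of _ "{..<n} \<times> {..<n}"]) (auto simp: Pairs_def)

lemma phi_pair_ne:
  assumes "k < l" "i < j" "(k, l) \<noteq> (i, j)"
  shows "phi i j (xv k - xv l) \<noteq> 0"
proof -
  have "(if k = i then j else k) \<noteq> (if l = i then j else l)" using assms by auto
  then show ?thesis unfolding phi_diff phi_xv by (rule xv_diff_ne)
qed

lemma antisym_phi:
  assumes "Kswap i j p = - p" "i \<noteq> j"
  shows "phi i j p = 0"
proof -
  have "phi i j p = - phi i j p" using phi_Kswap[OF assms(2), of p] assms(1) by (simp add: phi_uminus)
  show ?thesis
  proof (rule poly_mapping_eqI)
    fix a
    have "Poly_Mapping.lookup (phi i j p) a = - Poly_Mapping.lookup (phi i j p) a"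
      using \<open>phi i j p = - phi i j p\<close> by (metis lookup_uminus)
    then show "Poly_Mapping.lookup (phi i j p) a = Poly_Mapping.lookup 0 a" by simp
  qed
qed

lemma antisym_dvd_pairs:
  assumes anti: "\<And>i j. i < j \<Longrightarrow> j < n \<Longrightarrow> Kswap i j p = - p"
    and Q: "finite Q" "Q \<subseteq> Pairs n"
  shows "(\<Prod>(i, j)\<in>Q. xv i - xv j) dvd p"
  using Q
proof (induction Q rule: finite_induct)
  case empty then show ?case by simp
next
  case (insert x Q)
  obtain i j where x: "x = (i, j)" by (cases x)
  have ij: "i < j" "j < n" using insert.prems x by (auto simp: Pairs_def)
  obtain r where r: "p = (\<Prod>(i, j)\<in>Q. xv i - xv j) * r" using insert by auto
  have "phi i j p = 0" using antisym_phi[OF anti[OF ij]] ij by simp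
  then have "phi i j (\<Prod>(i, j)\<in>Q. xv i - xv j) * phi i j r = 0" using r by (simp add: phi_mult)
  moreover have "phi i j (\<Prod>(i, j)\<in>Q. xv i - xv j) \<noteq> 0"
  proof -
    have "phi i j (\<Prod>(i, j)\<in>Q. xv i - xv j) = (\<Prod>y\<in>Q. phi i j (case y of (k, l) \<Rightarrow> xv k - xv l))"
      by (simp add: phi_prod)
    moreover have "\<forall>y\<in>Q. phi i j (case y of (k, l) \<Rightarrow> xv k - xv l) \<noteq> 0"
    proof
      fix y assume y: "y \<in> Q"
      obtain k l where yk: "y = (k, l)" by (cases y)
      have "k < l" using y yk insert.prems by (auto simp: Pairs_def)
      moreover have "(k, l) \<noteq> (i, j)" using y yk x insert.hyps(2) by auto
      ultimately show "phi i j (case y of (k, l) \<Rightarrow> xv k - xv l) \<noteq> 0" using phi_pair_ne ij yk by simp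
    qed
    ultimately show ?thesis using insert.hyps(1) by simp
  qed
  ultimately have "phi i j r = 0" by simp
  then have "(xv i - xv j) dvd r" by (rule phi_zero_dvd)
  then obtain r' where r': "r = (xv i - xv j) * r'" by blast
  have pins: "(\<Prod>(i, j)\<in>insert x Q. xv i - xv j) = (xv i - xv j) * (\<Prod>(i, j)\<in>Q. xv i - xv j)"
    using insert.hyps x by simp
  have "p = (\<Prod>(i, j)\<in>insert x Q. xv i - xv j) * r'"
    unfolding pins r r' by (simp only: mult.assoc mult.commute mult.left_commute)
  then show ?case by (rule dvdI)
qed

lemma antisym_dvd_Vn:
  assumes anti: "\<And>i j. i < j \<Longrightarrow> j < n \<Longrightarrow> Kswap i j p = - p"
  shows "Vn n dvd p"
  unfolding Vn_def by (rule antisym_dvd_pairs[OF anti finite_Pairs]) auto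

section \<open>Leading terms in lex order\<close>

lemma lookup_mult_expand:
  fixes p q :: lpoly
  shows "Poly_Mapping.lookup (p * q) x = (\<Sum>a\<in>Poly_Mapping.keys p. \<Sum>b\<in>Poly_Mapping.keys q.
     if a + b = x then Poly_Mapping.lookup p a * Poly_Mapping.lookup q b else 0)"
  by (subst pm_mult_expand) (simp add: lookup_sum mult_single lookup_single when_def)

lemma keys_mult_sub:
  fixes p q :: lpoly
  assumes "x \<in> Poly_Mapping.keys (p * q)"
  shows "\<exists>a\<in>Poly_Mapping.keys p. \<exists>b\<in>Poly_Mapping.keys q. x = a + b"
proof -
  have "x \<in> {a + b |a b. a \<in> Poly_Mapping.keys p \<and> b \<in> Poly_Mapping.keys q}"
    using assms keys_mult[of p q] by (rule subsetD[rotated])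
  then show ?thesis by auto
qed

lemma lead_mult:
  fixes p q :: lpoly
  assumes p: "p \<noteq> 0" and q: "q \<noteq> 0"
  shows "Max (Poly_Mapping.keys (p * q)) = Max (Poly_Mapping.keys p) + Max (Poly_Mapping.keys q)"
    and "Poly_Mapping.lookup (p * q) (Max (Poly_Mapping.keys p) + Max (Poly_Mapping.keys q)) =
         Poly_Mapping.lookup p (Max (Poly_Mapping.keys p)) * Poly_Mapping.lookup q (Max (Poly_Mapping.keys q))"
proof -
  let ?Mp = "Max (Poly_Mapping.keys p)" and ?Mq = "Max (Poly_Mapping.keys q)"
  have kp: "Poly_Mapping.keys p \<noteq> {}" and kq: "Poly_Mapping.keys q \<noteq> {}" using p q by auto
  have Mp: "?Mp \<in> Poly_Mapping.keys p" "\<And>a. a \<in> Poly_Mapping.keys p \<Longrightarrow> a \<le> ?Mp"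
    using kp by auto
  have Mq: "?Mq \<in> Poly_Mapping.keys q" "\<And>a. a \<in> Poly_Mapping.keys q \<Longrightarrow> a \<le> ?Mq"
    using kq by auto
  have uniq: "a = ?Mp \<and> b = ?Mq" if "a \<in> Poly_Mapping.keys p" "b \<in> Poly_Mapping.keys q" "a + b = ?Mp + ?Mq" for a b
  proof -
    have a: "a \<le> ?Mp" and b: "b \<le> ?Mq" using that Mp Mq by auto
    have "a = ?Mp"
    proof (rule ccontr)
      assume "a \<noteq> ?Mp"
      then have "a < ?Mp" using a by simp
      then have "a + b < ?Mp + b" by (rule add_strict_right_mono)
      also have "\<dots> \<le> ?Mp + ?Mq" using b by (rule add_left_mono)
      finally show False using that(3) by simp
    qed
    then show ?thesis using that(3) by simp
  qed
  show lk: "Poly_Mapping.lookup (p * q) (?Mp + ?Mq) =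
         Poly_Mapping.lookup p ?Mp * Poly_Mapping.lookup q ?Mq"
  proof -
    have "Poly_Mapping.lookup (p * q) (?Mp + ?Mq) = (\<Sum>a\<in>Poly_Mapping.keys p. \<Sum>b\<in>Poly_Mapping.keys q.
       if a = ?Mp \<and> b = ?Mq then Poly_Mapping.lookup p a * Poly_Mapping.lookup q b else 0)"
      unfolding lookup_mult_expand using uniq by (intro sum.cong refl) auto
    also have "\<dots> = Poly_Mapping.lookup p ?Mp * Poly_Mapping.lookup q ?Mq"
    proof -
      have inner: "(\<Sum>b\<in>Poly_Mapping.keys q. if a = ?Mp \<and> b = ?Mq then Poly_Mapping.lookup p a * Poly_Mapping.lookup q b else 0)
          = (if a = ?Mp then Poly_Mapping.lookup p a * Poly_Mapping.lookup q ?Mq else 0)" for a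
      proof (cases "a = ?Mp")
        case True
        then have "(\<Sum>b\<in>Poly_Mapping.keys q. if a = ?Mp \<and> b = ?Mq then Poly_Mapping.lookup p a * Poly_Mapping.lookup q b else 0)
          = (\<Sum>b\<in>Poly_Mapping.keys q. if b = ?Mq then Poly_Mapping.lookup p a * Poly_Mapping.lookup q b else 0)" by simp
        also have "\<dots> = Poly_Mapping.lookup p a * Poly_Mapping.lookup q ?Mq"
          using Mq(1) by (subst sum.delta) simp_all
        finally show ?thesis using True by simp
      qed simp
      show ?thesis unfolding inner using Mp(1) by (subst sum.delta) simp_all
    qed
    finally show ?thesis .
  qed
  have "?Mp + ?Mq \<in> Poly_Mapping.keys (p * q)"
    using lk Mp(1) Mq(1) by (simp add: in_keys_iff)
  moreover have "x \<le> ?Mp + ?Mq" if "x \<in> Poly_Mapping.keys (p * q)" for x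
    using keys_mult_sub[OF that] Mp(2) Mq(2) by (auto intro: add_mono)
  ultimately show "Max (Poly_Mapping.keys (p * q)) = ?Mp + ?Mq"
    by (intro Max_eqI) auto
qed

lemma low_mult:
  fixes p q :: lpoly
  assumes p: "p \<noteq> 0" and q: "q \<noteq> 0"
  shows "Min (Poly_Mapping.keys (p * q)) = Min (Poly_Mapping.keys p) + Min (Poly_Mapping.keys q)"
proof -
  let ?Mp = "Min (Poly_Mapping.keys p)" and ?Mq = "Min (Poly_Mapping.keys q)"
  have kp: "Poly_Mapping.keys p \<noteq> {}" and kq: "Poly_Mapping.keys q \<noteq> {}" using p q by auto
  have Mp: "?Mp \<in> Poly_Mapping.keys p" "\<And>a. a \<in> Poly_Mapping.keys p \<Longrightarrow> ?Mp \<le> a"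
    using kp by auto
  have Mq: "?Mq \<in> Poly_Mapping.keys q" "\<And>a. a \<in> Poly_Mapping.keys q \<Longrightarrow> ?Mq \<le> a"
    using kq by auto
  have uniq: "a = ?Mp \<and> b = ?Mq" if "a \<in> Poly_Mapping.keys p" "b \<in> Poly_Mapping.keys q" "a + b = ?Mp + ?Mq" for a b
  proof -
    have a: "?Mp \<le> a" and b: "?Mq \<le> b" using that Mp Mq by auto
    have "a = ?Mp"
    proof (rule ccontr)
      assume "a \<noteq> ?Mp"
      then have "?Mp < a" using a by simp
      have "?Mp + ?Mq \<le> ?Mp + b" using b by (rule add_left_mono)
      also have "\<dots> < a + b" using \<open>?Mp < a\<close> by (rule add_strict_right_mono)
      finally show False using that(3) by simp
    qed
    then show ?thesis using that(3) by simp
  qed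
  have lk: "Poly_Mapping.lookup (p * q) (?Mp + ?Mq) =
         Poly_Mapping.lookup p ?Mp * Poly_Mapping.lookup q ?Mq"
  proof -
    have "Poly_Mapping.lookup (p * q) (?Mp + ?Mq) = (\<Sum>a\<in>Poly_Mapping.keys p. \<Sum>b\<in>Poly_Mapping.keys q.
       if a = ?Mp \<and> b = ?Mq then Poly_Mapping.lookup p a * Poly_Mapping.lookup q b else 0)"
      unfolding lookup_mult_expand using uniq by (intro sum.cong refl) auto
    also have "\<dots> = Poly_Mapping.lookup p ?Mp * Poly_Mapping.lookup q ?Mq"
    proof -
      have inner: "(\<Sum>b\<in>Poly_Mapping.keys q. if a = ?Mp \<and> b = ?Mq then Poly_Mapping.lookup p a * Poly_Mapping.lookup q b else 0)
          = (if a = ?Mp then Poly_Mapping.lookup p a * Poly_Mapping.lookup q ?Mq else 0)" for a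
      proof (cases "a = ?Mp")
        case True
        then have "(\<Sum>b\<in>Poly_Mapping.keys q. if a = ?Mp \<and> b = ?Mq then Poly_Mapping.lookup p a * Poly_Mapping.lookup q b else 0)
          = (\<Sum>b\<in>Poly_Mapping.keys q. if b = ?Mq then Poly_Mapping.lookup p a * Poly_Mapping.lookup q b else 0)" by simp
        also have "\<dots> = Poly_Mapping.lookup p a * Poly_Mapping.lookup q ?Mq"
          using Mq(1) by (subst sum.delta) simp_all
        finally show ?thesis using True by simp
      qed simp
      show ?thesis unfolding inner using Mp(1) by (subst sum.delta) simp_all
    qed
    finally show ?thesis .
  qed
  have "?Mp + ?Mq \<in> Poly_Mapping.keys (p * q)"
    using lk Mp(1) Mq(1) by (simp add: in_keys_iff)
  moreover have "?Mp + ?Mq \<le> x" if "x \<in> Poly_Mapping.keys (p * q)" for x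
    using keys_mult_sub[OF that] Mp(2) Mq(2) by (auto intro: add_mono)
  ultimately show "Min (Poly_Mapping.keys (p * q)) = ?Mp + ?Mq"
    by (intro Min_eqI) auto
qed

lemma lead_prod:
  fixes f :: "'x \<Rightarrow> lpoly"
  assumes "finite S" "\<And>x. x \<in> S \<Longrightarrow> f x \<noteq> 0"
  shows "prod f S \<noteq> 0 \<and> Max (Poly_Mapping.keys (prod f S)) = (\<Sum>x\<in>S. Max (Poly_Mapping.keys (f x))) \<and>
    Poly_Mapping.lookup (prod f S) (\<Sum>x\<in>S. Max (Poly_Mapping.keys (f x))) =
      (\<Prod>x\<in>S. Poly_Mapping.lookup (f x) (Max (Poly_Mapping.keys (f x))))
    \<and> Min (Poly_Mapping.keys (prod f S)) = (\<Sum>x\<in>S. Min (Poly_Mapping.keys (f x)))"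
  using assms
proof (induction S rule: finite_induct)
  case empty then show ?case by simp
next
  case (insert x S)
  have fx: "f x \<noteq> 0" using insert by simp
  have IH: "prod f S \<noteq> 0" "Max (Poly_Mapping.keys (prod f S)) = (\<Sum>x\<in>S. Max (Poly_Mapping.keys (f x)))"
    "Poly_Mapping.lookup (prod f S) (\<Sum>x\<in>S. Max (Poly_Mapping.keys (f x))) =
      (\<Prod>x\<in>S. Poly_Mapping.lookup (f x) (Max (Poly_Mapping.keys (f x))))"
    "Min (Poly_Mapping.keys (prod f S)) = (\<Sum>x\<in>S. Min (Poly_Mapping.keys (f x)))"
    using insert by auto
  have pe: "prod f (insert x S) = f x * prod f S" using insert.hyps by simp
  show ?case
  proof (intro conjI)
    show "prod f (insert x S) \<noteq> 0" using pe fx IH(1) by simp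
    show "Max (Poly_Mapping.keys (prod f (insert x S))) = (\<Sum>x\<in>insert x S. Max (Poly_Mapping.keys (f x)))"
      unfolding pe lead_mult(1)[OF fx IH(1)] IH(2) using insert.hyps by simp
    show "Poly_Mapping.lookup (prod f (insert x S)) (\<Sum>x\<in>insert x S. Max (Poly_Mapping.keys (f x))) =
      (\<Prod>x\<in>insert x S. Poly_Mapping.lookup (f x) (Max (Poly_Mapping.keys (f x))))"
    proof -
      have "Poly_Mapping.lookup (prod f (insert x S)) (\<Sum>x\<in>insert x S. Max (Poly_Mapping.keys (f x))) =
         Poly_Mapping.lookup (f x * prod f S) (Max (Poly_Mapping.keys (f x)) + Max (Poly_Mapping.keys (prod f S)))"
        unfolding pe IH(2) using insert.hyps by simp
      also have "\<dots> = Poly_Mapping.lookup (f x) (Max (Poly_Mapping.keys (f x))) *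
          Poly_Mapping.lookup (prod f S) (Max (Poly_Mapping.keys (prod f S)))"
        by (rule lead_mult(2)[OF fx IH(1)])
      also have "\<dots> = (\<Prod>x\<in>insert x S. Poly_Mapping.lookup (f x) (Max (Poly_Mapping.keys (f x))))"
        unfolding IH(2) IH(3) using insert.hyps by simp
      finally show ?thesis .
    qed
    show "Min (Poly_Mapping.keys (prod f (insert x S))) = (\<Sum>x\<in>insert x S. Min (Poly_Mapping.keys (f x)))"
      unfolding pe low_mult[OF fx IH(1)] IH(4) using insert.hyps by simp
  qed
qed

lemma less_pm_iff: "(a :: nat \<Rightarrow>\<^sub>0 int) < b \<longleftrightarrow>
   (\<exists>k. Poly_Mapping.lookup a k < Poly_Mapping.lookup b k \<and> (\<forall>k'<k. Poly_Mapping.lookup a k' = Poly_Mapping.lookup b k'))"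
  by (simp add: less_poly_mapping.rep_eq less_fun_def)

lemma single_less: "(i::nat) < j \<Longrightarrow> Poly_Mapping.single j (1::int) < Poly_Mapping.single i 1"
proof -
  assume ij: "i < j"
  have "\<exists>k. Poly_Mapping.lookup (Poly_Mapping.single j (1::int)) k < Poly_Mapping.lookup (Poly_Mapping.single i 1) k \<and>
     (\<forall>k'<k. Poly_Mapping.lookup (Poly_Mapping.single j (1::int)) k' = Poly_Mapping.lookup (Poly_Mapping.single i 1) k')"
    using ij by (intro exI[of _ i]) (auto simp: lookup_single when_def)
  then show ?thesis by (simp only: less_pm_iff)
qed

lemma keys_xv_diff: "i \<noteq> j \<Longrightarrow> Poly_Mapping.keys (xv i - xv j) = {Poly_Mapping.single i 1, Poly_Mapping.single j 1}"
proof -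
  assume ij: "i \<noteq> j"
  then have ne: "Poly_Mapping.single i (1::int) \<noteq> Poly_Mapping.single j 1"
    by (metis lookup_single_eq lookup_single_not_eq zero_neq_one)
  show ?thesis using ne by (auto simp: in_keys_iff lookup_minus lookup_xv split: if_splits)
qed

lemma lead_xv_diff:
  assumes "i < j"
  shows "Max (Poly_Mapping.keys (xv i - xv j)) = Poly_Mapping.single i 1"
    and "Min (Poly_Mapping.keys (xv i - xv j)) = Poly_Mapping.single j 1"
    and "Poly_Mapping.lookup (xv i - xv j) (Poly_Mapping.single i 1) = 1"
proof -
  have ne: "Poly_Mapping.single i (1::int) \<noteq> Poly_Mapping.single j 1"
    using assms by (metis lookup_single_eq lookup_single_not_eq zero_neq_one less_irrefl)
  have lt: "Poly_Mapping.single j (1::int) < Poly_Mapping.single i 1" using single_less[OF assms] .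
  show "Max (Poly_Mapping.keys (xv i - xv j)) = Poly_Mapping.single i 1"
    unfolding keys_xv_diff[OF less_imp_neq[OF assms]] using lt by (auto simp: max_def dest: leD)
  show "Min (Poly_Mapping.keys (xv i - xv j)) = Poly_Mapping.single j 1"
    unfolding keys_xv_diff[OF less_imp_neq[OF assms]] using lt by (auto simp: min_def dest: leD)
  show "Poly_Mapping.lookup (xv i - xv j) (Poly_Mapping.single i 1) = 1"
    using ne by (simp add: lookup_minus lookup_xv)
qed

definition vmax :: "nat \<Rightarrow> (nat \<Rightarrow>\<^sub>0 int)" where
  "vmax n = (\<Sum>(i, j)\<in>Pairs n. Poly_Mapping.single i 1)"
definition vmin :: "nat \<Rightarrow> (nat \<Rightarrow>\<^sub>0 int)" where
  "vmin n = (\<Sum>(i, j)\<in>Pairs n. Poly_Mapping.single j 1)"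

lemma Vn_lead:
  shows "Vn n \<noteq> 0" "Max (Poly_Mapping.keys (Vn n)) = vmax n"
    "Poly_Mapping.lookup (Vn n) (vmax n) = 1" "Min (Poly_Mapping.keys (Vn n)) = vmin n"
proof -
  let ?f = "\<lambda>(i, j). xv i - xv j"
  have nz: "?f x \<noteq> 0" if "x \<in> Pairs n" for x
    using that xv_diff_ne by (auto simp: Pairs_def)
  note L = lead_prod[where S="Pairs n" and f="?f", OF finite_Pairs nz]
  have mx: "Max (Poly_Mapping.keys (?f x)) = (case x of (i, j) \<Rightarrow> Poly_Mapping.single i 1)" if "x \<in> Pairs n" for x
    using that lead_xv_diff(1) by (auto simp: Pairs_def)
  have mn: "Min (Poly_Mapping.keys (?f x)) = (case x of (i, j) \<Rightarrow> Poly_Mapping.single j 1)" if "x \<in> Pairs n" for x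
    using that lead_xv_diff(2) by (auto simp: Pairs_def)
  have lc: "Poly_Mapping.lookup (?f x) (Max (Poly_Mapping.keys (?f x))) = 1" if "x \<in> Pairs n" for x
    using that lead_xv_diff(1,3) by (auto simp: Pairs_def)
  have smx: "(\<Sum>x\<in>Pairs n. Max (Poly_Mapping.keys (?f x))) = vmax n"
    unfolding vmax_def by (rule sum.cong[OF refl mx])
  have smn: "(\<Sum>x\<in>Pairs n. Min (Poly_Mapping.keys (?f x))) = vmin n"
    unfolding vmin_def by (rule sum.cong[OF refl mn])
  show "Vn n \<noteq> 0" using L by (simp add: Vn_def)
  show "Max (Poly_Mapping.keys (Vn n)) = vmax n" using L smx by (simp add: Vn_def)
  show "Min (Poly_Mapping.keys (Vn n)) = vmin n" using L smn by (simp add: Vn_def)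
  have "(\<Prod>x\<in>Pairs n. Poly_Mapping.lookup (?f x) (Max (Poly_Mapping.keys (?f x)))) = 1"
    using lc by (intro prod.neutral) auto
  then show "Poly_Mapping.lookup (Vn n) (vmax n) = 1" using L smx by (simp add: Vn_def)
qed

section \<open>Alternants\<close>

definition expo :: "nat \<Rightarrow> (nat \<Rightarrow> int) \<Rightarrow> (nat \<Rightarrow> nat) \<Rightarrow> (nat \<Rightarrow>\<^sub>0 int)" where
  "expo n e \<sigma> = (\<Sum>i<n. Poly_Mapping.single i (e (\<sigma> i)))"

lemma lookup_expo: "Poly_Mapping.lookup (expo n e \<sigma>) l = (if l < n then e (\<sigma> l) else 0)"
  unfolding expo_def lookup_sum lookup_single when_def
  by (cases "l < n") (auto simp: sum.delta)

lemma prod_var_pow: "(\<Prod>i<n. var_pow i (f i)) = Poly_Mapping.single (\<Sum>i<n. Poly_Mapping.single i (f i)) 1"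
  by (induction n) (simp_all add: var_pow_def mult_single add.commute)

lemma of_int_single: "(of_int c :: lpoly) * Poly_Mapping.single a 1 = Poly_Mapping.single a (of_int c)"
  by (simp flip: single_of_int add: mult_single)

lemma altdet_alt: "altdet n e = (\<Sum>\<sigma> | \<sigma> permutes {..<n}. Poly_Mapping.single (expo n e \<sigma>) (of_int (sign \<sigma>)))"
  unfolding altdet_def by (intro sum.cong refl) (simp add: prod_var_pow of_int_single expo_def)

lemma swap_expo: "i < n \<Longrightarrow> j < n \<Longrightarrow> swap_exp i j (expo n e \<sigma>) = expo n e (\<sigma> \<circ> Transposition.transpose i j)"
  by (rule poly_mapping_eqI) (simp add: lookup_swap_exp lookup_expo transpose_lt)

lemma altdet_antisym:
  assumes ij: "i < n" "j < n" "i \<noteq> j"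
  shows "Kswap i j (altdet n e) = - altdet n e"
proof -
  let ?\<tau> = "Transposition.transpose i j"
  have tp: "?\<tau> permutes {..<n}" using ij by (intro permutes_swap_id) auto
  have sgn: "sign (\<sigma> \<circ> ?\<tau>) = - sign \<sigma>" if "\<sigma> permutes {..<n}" for \<sigma>
  proof -
    have "permutation \<sigma>" using that by (rule permutes_imp_permutation[rotated]) simp
    then show ?thesis using ij by (simp add: sign_compose permutation_swap_id sign_swap_id)
  qed
  have "Kswap i j (altdet n e) = (\<Sum>\<sigma> | \<sigma> permutes {..<n}. Poly_Mapping.single (expo n e (\<sigma> \<circ> ?\<tau>)) (of_int (sign \<sigma>)))"
    unfolding altdet_alt Kswap_kmap kmap_sum kmap_single using ij by (simp add: swap_expo)
  also have "\<dots> = (\<Sum>\<sigma> | \<sigma> permutes {..<n}. Poly_Mapping.single (expo n e ((\<sigma> \<circ> ?\<tau>) \<circ> ?\<tau>)) (of_int (sign (\<sigma> \<circ> ?\<tau>))))"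
    by (rule sum_permutations_compose_right[OF tp])
  also have "\<dots> = (\<Sum>\<sigma> | \<sigma> permutes {..<n}. - Poly_Mapping.single (expo n e \<sigma>) (of_int (sign \<sigma>)))"
    by (intro sum.cong refl) (simp add: comp_assoc sgn single_uminus)
  also have "\<dots> = - altdet n e" by (simp add: altdet_alt sum_negf)
  finally show ?thesis .
qed

lemma altdet_cong:
  assumes "\<And>j. j < n \<Longrightarrow> e j = e' j" shows "altdet n e = altdet n e'"
  unfolding altdet_def
proof (intro sum.cong refl arg_cong2[where f="(*)"] prod.cong)
  fix \<sigma> i assume "\<sigma> \<in> {\<sigma>. \<sigma> permutes {..<n}}" "i \<in> {..<n}"
  then have "\<sigma> i < n" using permutes_in_image by fastforce
  then show "var_pow i (e (\<sigma> i)) = var_pow i (e' (\<sigma> i))" using assms by simp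
qed

lemma altdet_shift: "altdet n (\<lambda>j. e j + c) = (\<Prod>i<n. var_pow i c) * altdet n e"
  unfolding altdet_def sum_distrib_left
  by (intro sum.cong refl) (simp add: var_pow_add prod.distrib algebra_simps)

lemma altdet_Vn_dvd: "Vn n dvd altdet n e"
  by (rule antisym_dvd_Vn) (rule altdet_antisym, auto)

definition dlt :: "nat \<Rightarrow> nat \<Rightarrow> int" where "dlt n j = int n - 1 - int j"

definition rho :: "nat \<Rightarrow> nat \<Rightarrow> nat" where "rho n l = (if l < n then n - 1 - l else l)"

lemma rho_perm: "rho n permutes {..<n}"
proof -
  have inj: "inj_on (rho n) {..<n}" by (auto simp: inj_on_def rho_def)
  have "rho n ` {..<n} = {..<n}" by (rule endo_inj_surj) (auto simp: rho_def inj)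
  then have "bij_betw (rho n) {..<n} {..<n}" using inj by (simp add: bij_betw_def)
  then show ?thesis by (rule bij_imp_permutes) (simp add: rho_def)
qed

lemma perm_lt: "\<sigma> permutes {..<n} \<Longrightarrow> l < n \<Longrightarrow> \<sigma> l < n"
  using permutes_in_image by fastforce

lemma expo_inj:
  assumes s: "\<sigma> permutes {..<n}" and s': "\<sigma>' permutes {..<n}" and eq: "expo n (dlt n) \<sigma> = expo n (dlt n) \<sigma>'"
  shows "\<sigma> = \<sigma>'"
proof
  fix l show "\<sigma> l = \<sigma>' l"
  proof (cases "l < n")
    case True
    have "Poly_Mapping.lookup (expo n (dlt n) \<sigma>) l = Poly_Mapping.lookup (expo n (dlt n) \<sigma>') l" using eq by simp
    then show ?thesis using True by (simp add: lookup_expo dlt_def)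
  next
    case False then show ?thesis using permutes_not_in[OF s] permutes_not_in[OF s'] by simp
  qed
qed

lemma lookup_altdet: "Poly_Mapping.lookup (altdet n e) x = (\<Sum>\<sigma> | \<sigma> permutes {..<n}. if expo n e \<sigma> = x then of_int (sign \<sigma>) else 0)"
  unfolding altdet_alt lookup_sum by (intro sum.cong refl) (simp add: lookup_single when_def)

lemma lookup_D_expo:
  assumes s0: "\<sigma>0 permutes {..<n}"
  shows "Poly_Mapping.lookup (altdet n (dlt n)) (expo n (dlt n) \<sigma>0) = of_int (sign \<sigma>0)"
proof -
  have "Poly_Mapping.lookup (altdet n (dlt n)) (expo n (dlt n) \<sigma>0) =
     (\<Sum>\<sigma> | \<sigma> permutes {..<n}. if \<sigma> = \<sigma>0 then of_int (sign \<sigma>) else 0)"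
    unfolding lookup_altdet using expo_inj[OF _ s0] by (intro sum.cong refl) auto
  also have "\<dots> = of_int (sign \<sigma>0)" using s0 by (simp add: sum.delta finite_permutations)
  finally show ?thesis .
qed

lemma keys_altdet: "x \<in> Poly_Mapping.keys (altdet n e) \<Longrightarrow> \<exists>\<sigma>. \<sigma> permutes {..<n} \<and> x = expo n e \<sigma>"
proof (rule ccontr)
  assume x: "x \<in> Poly_Mapping.keys (altdet n e)" and "\<not> (\<exists>\<sigma>. \<sigma> permutes {..<n} \<and> x = expo n e \<sigma>)"
  then have "Poly_Mapping.lookup (altdet n e) x = 0" unfolding lookup_altdet by (intro sum.neutral) auto
  then show False using x by (simp add: in_keys_iff)
qed

lemma first_diff:
  fixes f g :: "nat \<Rightarrow> 'a"
  assumes "f \<noteq> g"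
  obtains i0 where "f i0 \<noteq> g i0" "\<And>l. l < i0 \<Longrightarrow> f l = g l"
proof -
  have "\<exists>i. f i \<noteq> g i" using assms by auto
  then have "\<exists>i. f i \<noteq> g i \<and> (\<forall>l<i. \<not> f l \<noteq> g l)" by (simp only: exists_least_iff[symmetric])
  then show ?thesis using that by blast
qed

lemma expo_lt_id:
  assumes s: "\<sigma> permutes {..<n}" and ne: "\<sigma> \<noteq> id"
  shows "expo n (dlt n) \<sigma> < expo n (dlt n) id"
proof -
  obtain i0 where i0: "\<sigma> i0 \<noteq> id i0" "\<And>l. l < i0 \<Longrightarrow> \<sigma> l = id l" using first_diff[OF ne] by blast
  have i0n: "i0 < n" using i0(1) permutes_not_in[OF s] by force
  have gt: "i0 < \<sigma> i0"
  proof (rule ccontr)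
    assume "\<not> i0 < \<sigma> i0"
    then have "\<sigma> i0 < i0" using i0(1) by simp
    then have "\<sigma> (\<sigma> i0) = \<sigma> i0" using i0(2) by simp
    then have "\<sigma> i0 = i0" using permutes_inj[OF s] by (meson injD)
    then show False using i0(1) by simp
  qed
  have "\<sigma> i0 < n" using perm_lt[OF s i0n] .
  then show ?thesis unfolding less_pm_iff
    using i0 i0n gt by (intro exI[of _ i0]) (auto simp: lookup_expo dlt_def)
qed

lemma expo_gt_rho:
  assumes s: "\<sigma> permutes {..<n}" and ne: "\<sigma> \<noteq> rho n"
  shows "expo n (dlt n) (rho n) < expo n (dlt n) \<sigma>"
proof -
  obtain i0 where i0: "\<sigma> i0 \<noteq> rho n i0" "\<And>l. l < i0 \<Longrightarrow> \<sigma> l = rho n l" using first_diff[OF ne] by blast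
  have i0n: "i0 < n"
  proof (rule ccontr)
    assume "\<not> i0 < n"
    then have "\<sigma> i0 = i0" "rho n i0 = i0" using permutes_not_in[OF s] by (auto simp: rho_def)
    then show False using i0(1) by simp
  qed
  have sn: "\<sigma> i0 < n" using perm_lt[OF s i0n] .
  have lt: "\<sigma> i0 < n - 1 - i0"
  proof (rule ccontr)
    assume "\<not> \<sigma> i0 < n - 1 - i0"
    then have gt: "\<sigma> i0 > n - 1 - i0" using i0(1) i0n by (simp add: rho_def)
    define l where "l = n - 1 - \<sigma> i0"
    have "l < i0" using gt sn i0n by (simp add: l_def)
    then have "\<sigma> l = n - 1 - l" using i0(2) i0n by (simp add: rho_def)
    also have "\<dots> = \<sigma> i0" using sn by (simp add: l_def)
    finally have "l = i0" using permutes_inj[OF s] by (meson injD)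
    then show False using \<open>l < i0\<close> by simp
  qed
  show ?thesis unfolding less_pm_iff
    using i0 i0n lt sn by (intro exI[of _ i0]) (auto simp: lookup_expo dlt_def rho_def)
qed

lemma D_nonzero: "altdet n (dlt n) \<noteq> 0"
proof
  assume "altdet n (dlt n) = 0"
  then have "Poly_Mapping.lookup (altdet n (dlt n)) (expo n (dlt n) id) = 0" by simp
  then show False using lookup_D_expo[OF permutes_id] by simp
qed

lemma D_max: "Max (Poly_Mapping.keys (altdet n (dlt n))) = expo n (dlt n) id"
proof (rule Max_eqI)
  show "expo n (dlt n) id \<in> Poly_Mapping.keys (altdet n (dlt n))"
    using lookup_D_expo[OF permutes_id] by (simp add: in_keys_iff)
next
  fix x assume "x \<in> Poly_Mapping.keys (altdet n (dlt n))"
  then obtain \<sigma> where s: "\<sigma> permutes {..<n}" and x: "x = expo n (dlt n) \<sigma>" using keys_altdet by blast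
  show "x \<le> expo n (dlt n) id"
    using expo_lt_id[OF s] x by (cases "\<sigma> = id") auto
qed simp

lemma D_min: "Min (Poly_Mapping.keys (altdet n (dlt n))) = expo n (dlt n) (rho n)"
proof (rule Min_eqI)
  show "expo n (dlt n) (rho n) \<in> Poly_Mapping.keys (altdet n (dlt n))"
    using lookup_D_expo[OF rho_perm] by (simp add: in_keys_iff)
next
  fix x assume "x \<in> Poly_Mapping.keys (altdet n (dlt n))"
  then obtain \<sigma> where s: "\<sigma> permutes {..<n}" and x: "x = expo n (dlt n) \<sigma>" using keys_altdet by blast
  show "expo n (dlt n) (rho n) \<le> x"
    using expo_gt_rho[OF s] x by (cases "\<sigma> = rho n") auto
qed simp

lemma Pairs_Sigma: "Pairs n = Sigma {..<n} (\<lambda>i. {i<..<n})"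
  by (auto simp: Pairs_def)

lemma expo_id_vmax: "expo n (dlt n) id = vmax n"
proof (rule poly_mapping_eqI)
  fix l
  have "Poly_Mapping.lookup (vmax n) l = (\<Sum>(i, j)\<in>Sigma {..<n} (\<lambda>i. {i<..<n}). if i = l then 1 else 0)"
    unfolding vmax_def lookup_sum Pairs_Sigma by (intro sum.cong refl) (auto simp: lookup_single when_def)
  also have "\<dots> = (\<Sum>i<n. \<Sum>j\<in>{i<..<n}. if i = l then 1 else 0)"
    by (rule sum.Sigma[symmetric]) auto
  also have "\<dots> = (\<Sum>i<n. if i = l then int (card {i<..<n}) else 0)"
    by (intro sum.cong refl) auto
  also have "\<dots> = (if l < n then int n - 1 - int l else 0)"
    by (simp add: sum.delta' of_nat_diff)
  finally show "Poly_Mapping.lookup (expo n (dlt n) id) l = Poly_Mapping.lookup (vmax n) l"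
    by (simp add: lookup_expo dlt_def)
qed

lemma expo_rho_vmin: "expo n (dlt n) (rho n) = vmin n"
proof (rule poly_mapping_eqI)
  fix l
  have "Poly_Mapping.lookup (vmin n) l = (\<Sum>(i, j)\<in>Sigma {..<n} (\<lambda>i. {i<..<n}). if j = l then 1 else 0)"
    unfolding vmin_def lookup_sum Pairs_Sigma by (intro sum.cong refl) (auto simp: lookup_single when_def)
  also have "\<dots> = (\<Sum>i<n. \<Sum>j\<in>{i<..<n}. if j = l then 1 else 0)"
    by (rule sum.Sigma[symmetric]) auto
  also have "\<dots> = (\<Sum>i<n. if i < l \<and> l < n then 1 else 0)"
    by (intro sum.cong refl) (auto simp: sum.delta)
  also have "\<dots> = (if l < n then int l else 0)"
  proof (cases "l < n")
    case True
    have "(\<Sum>i<n. if i < l \<and> l < n then 1 else 0) = (\<Sum>i\<in>{..<l}. 1::int)"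
      using True by (intro sum.mono_neutral_cong_right) auto
    then show ?thesis using True by simp
  qed simp
  finally show "Poly_Mapping.lookup (expo n (dlt n) (rho n)) l = Poly_Mapping.lookup (vmin n) l"
    by (simp add: lookup_expo dlt_def rho_def of_nat_diff)
qed

lemma D_eq_Vn: "altdet n (dlt n) = Vn n"
proof -
  obtain q where q: "altdet n (dlt n) = Vn n * q" using altdet_Vn_dvd by blast
  have qnz: "q \<noteq> 0" using q D_nonzero by auto
  have "vmax n = Max (Poly_Mapping.keys (altdet n (dlt n)))" using D_max expo_id_vmax by simp
  also have "\<dots> = Max (Poly_Mapping.keys (Vn n * q))" using q by simp
  also have "\<dots> = vmax n + Max (Poly_Mapping.keys q)" using lead_mult(1)[OF Vn_lead(1) qnz] Vn_lead(2) by simp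
  finally have "vmax n = vmax n + Max (Poly_Mapping.keys q)" .
  then have mx: "Max (Poly_Mapping.keys q) = 0" by simp
  have "vmin n = Min (Poly_Mapping.keys (altdet n (dlt n)))" using D_min expo_rho_vmin by simp
  also have "\<dots> = Min (Poly_Mapping.keys (Vn n * q))" using q by simp
  also have "\<dots> = vmin n + Min (Poly_Mapping.keys q)" using low_mult[OF Vn_lead(1) qnz] Vn_lead(4) by simp
  finally have "vmin n = vmin n + Min (Poly_Mapping.keys q)" .
  then have mn: "Min (Poly_Mapping.keys q) = 0" by simp
  have kq: "Poly_Mapping.keys q \<subseteq> {0}"
  proof
    fix x assume x: "x \<in> Poly_Mapping.keys q"
    have "x \<le> Max (Poly_Mapping.keys q)" "Min (Poly_Mapping.keys q) \<le> x" using x by auto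
    then show "x \<in> {0}" using mx mn by simp
  qed
  have qc: "q = Poly_Mapping.single 0 (Poly_Mapping.lookup q 0)"
    using pm_expand_superset[OF _ kq] by simp
  have "1 = Poly_Mapping.lookup (altdet n (dlt n)) (vmax n)"
    using lookup_D_expo[OF permutes_id] expo_id_vmax by simp
  also have "\<dots> = Poly_Mapping.lookup (Vn n) (vmax n) * Poly_Mapping.lookup q 0"
    using lead_mult(2)[OF Vn_lead(1) qnz] q mx Vn_lead(2) by simp
  finally have "Poly_Mapping.lookup q 0 = 1" using Vn_lead(3) by simp
  then have "q = 1" using qc by simp
  then show ?thesis using q by simp
qed

definition Xn :: "nat \<Rightarrow> lpoly" where "Xn n = (\<Prod>i<n. var_pow i (int n - 1))"

definition sch :: "nat \<Rightarrow> (nat \<Rightarrow> int) \<Rightarrow> lpoly" where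
  "sch n k = schur n (\<lambda>i. k i - ovec n i)"

lemma schur_prop: "sch n k * Vn n = Xn n * altdet n k"
proof -
  have D: "altdet n (\<lambda>j. int n - 1 - int j) = Vn n"
    using D_eq_Vn[of n] by (simp add: dlt_def[abs_def])
  have R: "altdet n (\<lambda>j. (k j - ovec n j) + int n - 1 - int j) = altdet n (\<lambda>j. k j + (int n - 1))"
    by (rule altdet_cong) (simp add: ovec_def)
  have R2: "altdet n (\<lambda>j. k j + (int n - 1)) = Xn n * altdet n k"
    by (simp add: altdet_shift Xn_def)
  obtain s where s: "altdet n (\<lambda>j. k j + (int n - 1)) = Vn n * s" using altdet_Vn_dvd by blast
  have "(THE s. s * altdet n (\<lambda>j. int n - 1 - int j) = altdet n (\<lambda>j. (k j - ovec n j) + int n - 1 - int j)) = s"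
  proof (rule the_equality)
    show "s * altdet n (\<lambda>j. int n - 1 - int j) = altdet n (\<lambda>j. (k j - ovec n j) + int n - 1 - int j)"
      unfolding D R s by (simp add: mult.commute)
  next
    fix s' assume "s' * altdet n (\<lambda>j. int n - 1 - int j) = altdet n (\<lambda>j. (k j - ovec n j) + int n - 1 - int j)"
    then have "s' * Vn n = s * Vn n" unfolding D R s by (simp add: mult.commute)
    then show "s' = s" using Vn_lead(1)[of n] by simp
  qed
  then have "sch n k = s" by (simp add: sch_def schur_def)
  then show ?thesis using s R2 by (simp add: mult.commute)
qed

lemma lstar_Xn: "lstar (Xn n) * Xn n = 1"
proof -
  have "lstar (Xn n) * Xn n = (\<Prod>i<n. var_pow i (- (int n - 1)) * var_pow i (int n - 1))"
    by (simp add: Xn_def lstar_prod prod.distrib)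
  also have "\<dots> = 1" by (simp add: var_pow_add[symmetric])
  finally show ?thesis .
qed

definition Offd :: "nat \<Rightarrow> (nat \<times> nat) set" where "Offd n = Sigma {..<n} (\<lambda>i. {..<n} - {i})"

lemma offd_prod: "(\<Prod>i<n. \<Prod>j\<in>{..<n} - {i}. F i j) = (\<Prod>(i, j)\<in>Offd n. F i j)"
  unfolding Offd_def by (rule prod.Sigma) auto

lemma Offd_split: "Offd n = Pairs n \<union> prod.swap ` Pairs n"
  by (auto simp: Offd_def Pairs_def image_iff)

lemma offd_pairs: "(\<Prod>(i, j)\<in>Offd n. F i j) = (\<Prod>(i, j)\<in>Pairs n. F i j * F j i)"
proof -
  have disj: "Pairs n \<inter> prod.swap ` Pairs n = {}" by (auto simp: Pairs_def)
  have fin: "finite (prod.swap ` Pairs n)" using finite_Pairs by simp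
  have "(\<Prod>(i, j)\<in>Offd n. F i j) = (\<Prod>(i, j)\<in>Pairs n. F i j) * (\<Prod>(i, j)\<in>prod.swap ` Pairs n. F i j)"
    unfolding Offd_split by (rule prod.union_disjoint[OF finite_Pairs fin disj])
  also have "(\<Prod>(i, j)\<in>prod.swap ` Pairs n. F i j) = (\<Prod>(i, j)\<in>Pairs n. F j i)"
  proof -
    have "inj_on prod.swap (Pairs n)" by (auto simp: inj_on_def)
    then show ?thesis by (simp add: prod.reindex comp_def split_def)
  qed
  finally show ?thesis by (simp add: prod.distrib split_def)
qed

lemma offd_swap: "(\<Prod>(i, j)\<in>Offd n. F i j) = (\<Prod>(i, j)\<in>Offd n. F j i)"
  unfolding offd_pairs by (intro prod.cong refl) (auto simp: mult.commute)

definition Vprod :: "nat \<Rightarrow> lpoly" where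
  "Vprod n = (\<Prod>i<n. \<Prod>j\<in>{..<n} - {i}. 1 - var_pow i 1 * var_pow j (-1))"

lemma Vprod_eq: "Vprod n = lstar (Vn n) * Vn n"
proof -
  have pair: "lstar (xv i - xv j) * (xv i - xv j) =
      (1 - var_pow i 1 * var_pow j (-1)) * (1 - var_pow j 1 * var_pow i (-1))" for i j
  proof -
    define u where "u = var_pow i 1 * var_pow j (-1)"
    define u' where "u' = var_pow j 1 * var_pow i (-1)"
    have e1: "var_pow i (-1) * var_pow i 1 = 1" and e2: "var_pow j (-1) * var_pow j 1 = 1"
      using var_pow_inv[of i 1] var_pow_inv[of j 1] by simp_all
    have uu: "u * u' = 1"
    proof -
      have "u * u' = (var_pow i (-1) * var_pow i 1) * (var_pow j (-1) * var_pow j 1)"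
        by (simp add: u_def u'_def ac_simps)
      then show ?thesis using e1 e2 by simp
    qed
    have "lstar (xv i - xv j) * (xv i - xv j) =
        var_pow i (-1) * var_pow i 1 - var_pow i (-1) * var_pow j 1 - var_pow j (-1) * var_pow i 1 + var_pow j (-1) * var_pow j 1"
      by (simp add: xv_def lstar_diff algebra_simps)
    also have "\<dots> = 2 - u' - u" unfolding e1 e2 u_def u'_def by (simp add: ac_simps)
    also have "\<dots> = (1 - u) * (1 - u')" using uu by (simp add: algebra_simps)
    finally show ?thesis by (simp add: u_def u'_def)
  qed
  have "lstar (Vn n) * Vn n = (\<Prod>(i, j)\<in>Pairs n. lstar (xv i - xv j) * (xv i - xv j))"
    by (simp add: Vn_def lstar_prod prod.distrib[symmetric] split_def)
  also have "\<dots> = (\<Prod>(i, j)\<in>Pairs n. (1 - var_pow i 1 * var_pow j (-1)) * (1 - var_pow j 1 * var_pow i (-1)))"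
    by (simp add: pair)
  also have "\<dots> = Vprod n"
    unfolding Vprod_def offd_prod offd_pairs ..
  finally show ?thesis by simp
qed

definition sc :: "nat \<Rightarrow> (nat \<Rightarrow>\<^sub>0 int) \<Rightarrow> (nat \<Rightarrow>\<^sub>0 int)" where
  "sc N a = Poly_Mapping.map (\<lambda>x. int N * x) a"

lemma lookup_sc: "Poly_Mapping.lookup (sc N a) i = int N * Poly_Mapping.lookup a i"
  by (simp add: sc_def map.rep_eq when_def)

lemma sc_add: "sc N (a + b) = sc N a + sc N b"
  by (rule poly_mapping_eqI) (simp add: lookup_sc lookup_add algebra_simps)

lemma sc_zero: "sc N 0 = 0"
  by (rule poly_mapping_eqI) (simp add: lookup_sc)

lemma sc_single: "sc N (Poly_Mapping.single i e) = Poly_Mapping.single i (int N * e)"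
  by (rule poly_mapping_eqI) (simp add: lookup_sc lookup_single when_def)

lemma inj_sc: "N \<ge> 1 \<Longrightarrow> inj (sc N)"
proof (rule injI)
  fix a b assume N: "N \<ge> 1" and e: "sc N a = sc N b"
  show "a = b"
  proof (rule poly_mapping_eqI)
    fix i
    have "int N * Poly_Mapping.lookup a i = int N * Poly_Mapping.lookup b i"
      using e by (metis lookup_sc)
    then show "Poly_Mapping.lookup a i = Poly_Mapping.lookup b i" using N by simp
  qed
qed

abbreviation KS :: "nat \<Rightarrow> lpoly \<Rightarrow> lpoly" where "KS N \<equiv> kmap (sc N)"

lemma KS_mult: "KS N (p * q) = KS N p * KS N q" by (rule kmap_mult) (rule sc_add)
lemma KS_one: "KS N 1 = 1" by (rule kmap_one) (rule sc_zero)
lemma KS_prod: "KS N (prod f S) = (\<Prod>x\<in>S. KS N (f x))"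
  by (rule hom_prod_gen) (auto simp: KS_mult KS_one)
lemma KS_power: "KS N (p ^ k) = KS N p ^ k"
  by (rule hom_power_gen) (auto simp: KS_mult KS_one)
lemma KS_var_pow: "KS N (var_pow i e) = var_pow i (int N * e)"
  by (simp add: var_pow_def sc_single)

definition Wx :: "nat \<Rightarrow> nat \<Rightarrow> nat \<Rightarrow> lpoly" where
  "Wx b N n = (\<Prod>i<n. \<Prod>j\<in>{..<n} - {i}. (1 - var_pow i (int N) * var_pow j (- int N)) ^ b)"

lemma Wx_KS: "Wx b N n = KS N (Wz b n)"
  by (simp add: Wx_def Wz_def KS_prod KS_power kmap_diff KS_one KS_mult KS_var_pow)

lemma Delta_split: "Delta b N n = Wx b N n * Vprod n"
  by (simp add: Delta_def Wx_def Vprod_def prod.distrib)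

abbreviation RR :: "lpoly \<Rightarrow> lpoly" where "RR \<equiv> kmap uminus"

lemma RR_mult: "RR (p * q) = RR p * RR q" by (rule kmap_mult) simp
lemma RR_one: "RR 1 = 1" by (rule kmap_one) simp
lemma RR_prod: "RR (prod f S) = (\<Prod>x\<in>S. RR (f x))"
  by (rule hom_prod_gen) (auto simp: RR_mult RR_one)
lemma RR_power: "RR (p ^ k) = RR p ^ k"
  by (rule hom_power_gen) (auto simp: RR_mult RR_one)
lemma RR_var_pow: "RR (var_pow i e) = var_pow i (- e)"
  by (simp add: var_pow_def single_uminus)

lemma Wz_RR: "RR (Wz b n) = Wz b n"
proof -
  have "RR (Wz b n) = (\<Prod>i<n. \<Prod>j\<in>{..<n} - {i}. (1 - var_pow i (-1) * var_pow j 1) ^ b)"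
    by (simp add: Wz_def RR_prod RR_power kmap_diff RR_one RR_mult RR_var_pow)
  also have "\<dots> = (\<Prod>(i, j)\<in>Offd n. (1 - var_pow i (-1) * var_pow j 1) ^ b)" by (rule offd_prod)
  also have "\<dots> = (\<Prod>(i, j)\<in>Offd n. (1 - var_pow j (-1) * var_pow i 1) ^ b)" by (rule offd_swap)
  also have "\<dots> = (\<Prod>(i, j)\<in>Offd n. (1 - var_pow i 1 * var_pow j (-1)) ^ b)"
    by (simp add: mult.commute)
  also have "\<dots> = Wz b n" unfolding Wz_def offd_prod ..
  finally show ?thesis .
qed

lemma Wz_sym: "Poly_Mapping.lookup (Wz b n) (- a) = Poly_Mapping.lookup (Wz b n) a"
proof -
  have "Poly_Mapping.lookup (Wz b n) a = Poly_Mapping.lookup (RR (Wz b n)) (- a)"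
    using lookup_kmap_inj[of uminus "Wz b n" a] by (simp add: inj_def)
  then show ?thesis using Wz_RR by simp
qed

definition E0 :: "nat \<Rightarrow> (nat \<Rightarrow> int) \<Rightarrow> (nat \<Rightarrow>\<^sub>0 int)" where
  "E0 n \<kappa> = (\<Sum>i<n. Poly_Mapping.single i (\<kappa> i))"

lemma expo_E0: "expo n k w = E0 n (k \<circ> w)"
  by (simp add: expo_def E0_def)

lemma lookup_E0: "Poly_Mapping.lookup (E0 n \<kappa>) i = (if i < n then \<kappa> i else 0)"
  unfolding E0_def lookup_sum lookup_single when_def
  by (cases "i < n") (auto simp: sum.delta)

lemma ul_dvd_eq:
  fixes a b :: int
  assumes "1 \<le> a" "a \<le> int N" "1 \<le> b" "b \<le> int N" "int N dvd (a - b)"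
  shows "a = b"
proof -
  obtain t where t: "a - b = int N * t" using assms(5) by (elim dvdE)
  consider "t = 0" | "t \<ge> 1" | "t \<le> -1" by linarith
  then show ?thesis
  proof cases
    case 1 then show ?thesis using t by simp
  next
    case 2
    then have "int N * 1 \<le> int N * t" by (intro mult_left_mono) simp_all
    then show ?thesis using t assms by linarith
  next
    case 3
    then have "int N * t \<le> int N * (-1)" by (intro mult_left_mono) simp_all
    then show ?thesis using t assms by linarith
  qed
qed

lemma term_match:
  assumes N: "N \<ge> 1" and sym: "\<And>a. Poly_Mapping.lookup p (- a) = Poly_Mapping.lookup p a"
  shows "Poly_Mapping.lookup (KS N p) (E0 n \<kappa> - E0 n \<mu>) =
    (if Cv N n \<kappa> = Cv N n \<mu> then Poly_Mapping.lookup p (Ev N n \<kappa> - Ev N n \<mu>) else 0)"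
proof (cases "Cv N n \<kappa> = Cv N n \<mu>")
  case True
  have ul_eq: "ul N (\<kappa> i) = ul N (\<mu> i)" if "i < n" for i
  proof -
    have "nat (ul N (\<kappa> i)) = nat (ul N (\<mu> i))"
      using True that by (metis Cv_def)
    then show ?thesis using ul_range[OF N, of "\<kappa> i"] ul_range[OF N, of "\<mu> i"] by simp
  qed
  have e: "E0 n \<kappa> - E0 n \<mu> = sc N (Ev N n \<mu> - Ev N n \<kappa>)"
  proof (rule poly_mapping_eqI)
    fix i
    show "Poly_Mapping.lookup (E0 n \<kappa> - E0 n \<mu>) i = Poly_Mapping.lookup (sc N (Ev N n \<mu> - Ev N n \<kappa>)) i"
    proof (cases "i < n")
      case True
      have "\<kappa> i = ul N (\<kappa> i) - int N * ol N (\<kappa> i)" "\<mu> i = ul N (\<mu> i) - int N * ol N (\<mu> i)"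
        using ul_ol[OF N] by blast+
      then have "\<kappa> i - \<mu> i = int N * (ol N (\<mu> i) - ol N (\<kappa> i))"
        using ul_eq[OF True] by (simp add: algebra_simps)
      then show ?thesis using True by (simp add: lookup_minus lookup_E0 lookup_sc lookup_Ev)
    next
      case False then show ?thesis by (simp add: lookup_minus lookup_E0 lookup_sc lookup_Ev)
    qed
  qed
  have "Poly_Mapping.lookup (KS N p) (E0 n \<kappa> - E0 n \<mu>) = Poly_Mapping.lookup p (Ev N n \<mu> - Ev N n \<kappa>)"
    unfolding e by (rule lookup_kmap_inj[OF inj_sc[OF N]])
  also have "\<dots> = Poly_Mapping.lookup p (Ev N n \<kappa> - Ev N n \<mu>)"
    using sym[of "Ev N n \<kappa> - Ev N n \<mu>"] by simp
  finally show ?thesis using True by simp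
next
  case False
  then obtain i where i: "i < n" "nat (ul N (\<kappa> i)) \<noteq> nat (ul N (\<mu> i))"
    by (auto simp: Cv_def fun_eq_iff split: if_splits)
  have "E0 n \<kappa> - E0 n \<mu> \<notin> range (sc N)"
  proof
    assume "E0 n \<kappa> - E0 n \<mu> \<in> range (sc N)"
    then obtain y where y: "E0 n \<kappa> - E0 n \<mu> = sc N y" by blast
    have "\<kappa> i - \<mu> i = int N * Poly_Mapping.lookup y i"
      using arg_cong[OF y, of "\<lambda>q. Poly_Mapping.lookup q i"] i(1) by (simp add: lookup_minus lookup_E0 lookup_sc)
    moreover have "\<kappa> i = ul N (\<kappa> i) - int N * ol N (\<kappa> i)" "\<mu> i = ul N (\<mu> i) - int N * ol N (\<mu> i)"
      using ul_ol[OF N] by blast+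
    ultimately have "ul N (\<kappa> i) - ul N (\<mu> i) = int N * (Poly_Mapping.lookup y i + ol N (\<kappa> i) - ol N (\<mu> i))"
      by (simp add: algebra_simps)
    then have "int N dvd (ul N (\<kappa> i) - ul N (\<mu> i))" by simp
    then have "ul N (\<kappa> i) = ul N (\<mu> i)"
      using ul_range[OF N, of "\<kappa> i"] ul_range[OF N, of "\<mu> i"] by (intro ul_dvd_eq) auto
    then show False using i(2) by simp
  qed
  then show ?thesis using False by (simp add: lookup_kmap_notin)
qed

section \<open>The pair identity\<close>

lemma lookup_mult_single:
  fixes p :: lpoly
  shows "Poly_Mapping.lookup (p * Poly_Mapping.single e c) x = Poly_Mapping.lookup p (x - e) * c"
proof -
  have "p * Poly_Mapping.single e c = (\<Sum>a\<in>Poly_Mapping.keys p. Poly_Mapping.single (a + e) (Poly_Mapping.lookup p a * c))"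
    by (subst pm_expand[of p]) (simp add: sum_distrib_right mult_single)
  then have "Poly_Mapping.lookup (p * Poly_Mapping.single e c) x =
      (\<Sum>a\<in>Poly_Mapping.keys p. if a = x - e then Poly_Mapping.lookup p a * c else 0)"
    by (simp add: lookup_sum lookup_single when_def eq_diff_eq)
  also have "\<dots> = Poly_Mapping.lookup p (x - e) * c" by (simp add: sum.delta in_keys_iff)
  finally show ?thesis .
qed

lemma ct_single: "const_term (p * Poly_Mapping.single e c) = Poly_Mapping.lookup p (- e) * c"
  by (simp add: const_term_def lookup_mult_single)

lemma ct_sum: "const_term (sum f S) = (\<Sum>x\<in>S. const_term (f x))"
  by (simp add: const_term_def lookup_sum)

lemma ct_if: "const_term (p * (if P then q else 0)) = (if P then const_term (p * q) else 0)"
  by (simp add: const_term_def)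

abbreviation Pn :: "nat \<Rightarrow> (nat \<Rightarrow> nat) set" where "Pn n \<equiv> {w. w permutes {..<n}}"

definition zsum :: "nat \<Rightarrow> nat \<Rightarrow> (nat \<Rightarrow> int) \<Rightarrow> (nat \<Rightarrow> int) \<Rightarrow> lpoly" where
  "zsum N n k l = (\<Sum>c\<in>tidx N n. lstar (uhat N n k c) * uhat N n l c)"

lemma zsum_eq:
  assumes N: "N \<ge> 1"
  shows "zsum N n k l = (\<Sum>w\<in>Pn n. \<Sum>w'\<in>Pn n. if Cv N n (k \<circ> w) = Cv N n (l \<circ> w') then
     Poly_Mapping.single (Ev N n (l \<circ> w') - Ev N n (k \<circ> w)) (of_int (sign w * sign w')) else 0)"
proof -
  have t: "lstar (uhat N n k c) * uhat N n l c = (\<Sum>w\<in>Pn n. \<Sum>w'\<in>Pn n.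
      if c = Cv N n (k \<circ> w) \<and> c = Cv N n (l \<circ> w') then
     Poly_Mapping.single (Ev N n (l \<circ> w') - Ev N n (k \<circ> w)) (of_int (sign w * sign w')) else 0)" for c
    unfolding uhat_Cv lstar_sum sum_product
    by (intro sum.cong refl) (simp add: mult_single)
  have "zsum N n k l = (\<Sum>w\<in>Pn n. \<Sum>w'\<in>Pn n. \<Sum>c\<in>tidx N n.
      if c = Cv N n (k \<circ> w) \<and> c = Cv N n (l \<circ> w') then
     Poly_Mapping.single (Ev N n (l \<circ> w') - Ev N n (k \<circ> w)) (of_int (sign w * sign w')) else 0)"
    unfolding zsum_def t by (subst sum.swap) (simp add: sum.swap[of _ "tidx N n"])
  also have "\<dots> = (\<Sum>w\<in>Pn n. \<Sum>w'\<in>Pn n. if Cv N n (k \<circ> w) = Cv N n (l \<circ> w') then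
     Poly_Mapping.single (Ev N n (l \<circ> w') - Ev N n (k \<circ> w)) (of_int (sign w * sign w')) else 0)"
  proof (intro sum.cong refl)
    fix w w'
    have "Cv N n (k \<circ> w) \<in> tidx N n" "Cv N n (l \<circ> w') \<in> tidx N n" by (rule Cv_tidx[OF N])+
    then show "(\<Sum>c\<in>tidx N n. if c = Cv N n (k \<circ> w) \<and> c = Cv N n (l \<circ> w') then
     Poly_Mapping.single (Ev N n (l \<circ> w') - Ev N n (k \<circ> w)) (of_int (sign w * sign w')) else 0) =
     (if Cv N n (k \<circ> w) = Cv N n (l \<circ> w') then
     Poly_Mapping.single (Ev N n (l \<circ> w') - Ev N n (k \<circ> w)) (of_int (sign w * sign w')) else 0)"
      by (simp add: sum.delta finite_tidx conj_commute eq_commute[of _ "Cv N n (k \<circ> w)"] cong: conj_cong)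
  qed
  finally show ?thesis .
qed

lemma ct_zside:
  assumes N: "N \<ge> 1"
  shows "const_term (Wz b n * zsum N n k l) = (\<Sum>w\<in>Pn n. \<Sum>w'\<in>Pn n.
     (if Cv N n (k \<circ> w) = Cv N n (l \<circ> w') then Poly_Mapping.lookup (Wz b n) (Ev N n (k \<circ> w) - Ev N n (l \<circ> w')) else 0)
     * of_int (sign w * sign w'))"
  unfolding zsum_eq[OF N] sum_distrib_left ct_sum ct_if ct_single
  by (intro sum.cong refl) simp

lemma altdet_prod:
  "lstar (altdet n k) * altdet n l = (\<Sum>w\<in>Pn n. \<Sum>w'\<in>Pn n.
     Poly_Mapping.single (expo n l w' - expo n k w) (of_int (sign w * sign w')))"
  unfolding altdet_alt lstar_sum sum_product
  by (intro sum.cong refl) (simp add: mult_single)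

lemma ct_xside:
  assumes N: "N \<ge> 1"
  shows "const_term (Wx b N n * (lstar (altdet n k) * altdet n l)) = (\<Sum>w\<in>Pn n. \<Sum>w'\<in>Pn n.
     (if Cv N n (k \<circ> w) = Cv N n (l \<circ> w') then Poly_Mapping.lookup (Wz b n) (Ev N n (k \<circ> w) - Ev N n (l \<circ> w')) else 0)
     * of_int (sign w * sign w'))"
  unfolding altdet_prod sum_distrib_left ct_sum ct_single
proof (intro sum.cong refl)
  fix w w'
  have "- (expo n l w' - expo n k w) = E0 n (k \<circ> w) - E0 n (l \<circ> w')"
    by (simp add: expo_E0)
  then show "Poly_Mapping.lookup (Wx b N n) (- (expo n l w' - expo n k w)) * of_int (sign w * sign w') =
     (if Cv N n (k \<circ> w) = Cv N n (l \<circ> w') then Poly_Mapping.lookup (Wz b n) (Ev N n (k \<circ> w) - Ev N n (l \<circ> w')) else 0)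
     * of_int (sign w * sign w')"
    unfolding Wx_KS using term_match[OF N Wz_sym] by simp
qed

lemma Delta_pair:
  "Delta b N n * lstar (sch n k) * sch n l = Wx b N n * (lstar (altdet n k) * altdet n l)"
proof -
  have "Delta b N n * lstar (sch n k) * sch n l = Wx b N n * (lstar (sch n k * Vn n) * (sch n l * Vn n))"
    by (simp add: Delta_split Vprod_eq lstar_mult ac_simps)
  also have "\<dots> = Wx b N n * (lstar (Xn n * altdet n k) * (Xn n * altdet n l))"
    by (simp only: schur_prop)
  also have "\<dots> = Wx b N n * ((lstar (Xn n) * Xn n) * (lstar (altdet n k) * altdet n l))"
    by (simp add: lstar_mult ac_simps)
  also have "\<dots> = Wx b N n * (lstar (altdet n k) * altdet n l)" by (simp add: lstar_Xn)
  finally show ?thesis .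
qed

lemma pair_identity:
  assumes N: "N \<ge> 1"
  shows "const_term (Wz b n * zsum N n k l) = const_term (Delta b N n * lstar (sch n k) * sch n l)"
  unfolding Delta_pair ct_zside[OF N] ct_xside[OF N] ..

lemma lscale_mult: "lscale a X * lscale b Y = lscale (a * b) (X * Y)"
proof -
  have "lscale a X * lscale b Y = (Poly_Mapping.single 0 a * Poly_Mapping.single 0 b) * (X * Y)"
    by (simp add: lscale_conv ac_simps)
  then show ?thesis by (simp add: mult_single lscale_conv)
qed

lemma lscale_sum: "lscale c (sum f S) = (\<Sum>x\<in>S. lscale c (f x))"
  by (simp add: lscale_conv sum_distrib_left)

lemma ct_lscale: "const_term (P * lscale c Q) = c * const_term (P * Q)"
proof -
  have "P * lscale c Q = lscale c (P * Q)" by (simp add: lscale_conv ac_simps)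
  then show ?thesis by (simp add: const_term_def lookup_lscale)
qed

lemma expand1:
  "lstar (\<Sum>k\<in>K. lscale (\<alpha> k) (x k)) * (\<Sum>l\<in>L. lscale (\<beta> l) (y l)) =
   (\<Sum>k\<in>K. \<Sum>l\<in>L. lscale (cnj (\<alpha> k) * \<beta> l) (lstar (x k) * y l))"
  by (simp add: lstar_sum lstar_scale sum_product lscale_mult)

lemma ct_expand:
  "const_term (P * (\<Sum>k\<in>K. \<Sum>l\<in>L. lscale (\<gamma> k l) (Q k l))) = (\<Sum>k\<in>K. \<Sum>l\<in>L. \<gamma> k l * const_term (P * Q k l))"
  by (simp add: sum_distrib_left ct_sum ct_lscale)

theorem proposition15:
  fixes N n b :: nat and f g :: "(nat \<Rightarrow> nat) \<Rightarrow> lpoly"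
  assumes "N \<ge> 1" and "n \<ge> 1" and "b \<ge> 1"
    and "f \<in> Fspace N n" and "g \<in> Fspace N n"
  shows "ip_z b N n f g = ip_x b N n (Omega N n f) (Omega N n g)"
proof -
  note N = assms(1) and fF = assms(4) and gF = assms(5)
  let ?Kf = "Kset N n f" and ?Kg = "Kset N n g" and ?\<alpha> = "gco N n f" and ?\<beta> = "gco N n g"
  have fs: "f c = (\<Sum>k\<in>?Kf. lscale (?\<alpha> k) (uhat N n k c))" for c
    by (subst span[OF N fF]) (rule refl)
  have gs: "g c = (\<Sum>k\<in>?Kg. lscale (?\<beta> k) (uhat N n k c))" for c
    by (subst span[OF N gF]) (rule refl)
  have Of: "Omega N n f = (\<Sum>k\<in>?Kf. lscale (?\<alpha> k) (sch n k))"
    using Omega_eq[OF N fF] by (simp add: sch_def)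
  have Og: "Omega N n g = (\<Sum>k\<in>?Kg. lscale (?\<beta> k) (sch n k))"
    using Omega_eq[OF N gF] by (simp add: sch_def)
  have "(\<Sum>c\<in>tidx N n. lstar (f c) * g c) =
     (\<Sum>c\<in>tidx N n. \<Sum>k\<in>?Kf. \<Sum>l\<in>?Kg. lscale (cnj (?\<alpha> k) * ?\<beta> l) (lstar (uhat N n k c) * uhat N n l c))"
    by (rule sum.cong[OF refl]) (simp only: fs gs expand1)
  also have "\<dots> = (\<Sum>k\<in>?Kf. \<Sum>l\<in>?Kg. lscale (cnj (?\<alpha> k) * ?\<beta> l) (zsum N n k l))"
    unfolding zsum_def lscale_sum
    by (subst sum.swap, rule sum.cong[OF refl], rule sum.swap)
  finally have zs: "(\<Sum>c\<in>tidx N n. lstar (f c) * g c) = (\<Sum>k\<in>?Kf. \<Sum>l\<in>?Kg. lscale (cnj (?\<alpha> k) * ?\<beta> l) (zsum N n k l))" .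
  have "ip_z b N n f g = inverse (fact n) * const_term (Wz b n * (\<Sum>c\<in>tidx N n. lstar (f c) * g c))"
    by (rule ip_z_formula) (use fF gF Fspace_tspace in auto)
  also have "\<dots> = inverse (fact n) * (\<Sum>k\<in>?Kf. \<Sum>l\<in>?Kg. cnj (?\<alpha> k) * ?\<beta> l * const_term (Wz b n * zsum N n k l))"
    unfolding zs ct_expand ..
  also have "\<dots> = inverse (fact n) * (\<Sum>k\<in>?Kf. \<Sum>l\<in>?Kg. cnj (?\<alpha> k) * ?\<beta> l * const_term (Delta b N n * (lstar (sch n k) * sch n l)))"
    by (simp only: pair_identity[OF N] mult.assoc)
  also have "\<dots> = inverse (fact n) * const_term (Delta b N n * (lstar (Omega N n f) * Omega N n g))"
    unfolding Of Og expand1 ct_expand ..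
  also have "\<dots> = ip_x b N n (Omega N n f) (Omega N n g)"
    by (simp add: ip_x_def mult.assoc)
  finally show ?thesis .
qed

end
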